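(* Let $d\ge1$, let $T>0$ be a finite random variable with $D\in\{1,\dots,d\}$, and let $\tilde T$ be a finite random variable with $0<\tilde T\le T$ and $\tilde D=D\,\mathbf 1\{\tilde T=T\}$. Then for all $j\in\{1,\dots,d\}$, all $s\in\mathcal J$ and all $t>s$: $$ \begin{aligned} &P(T\le t,D=j\mid T>s)-P(T\le t,D=j\mid\tilde T>s)\\ &=\int_{(s,t]}F_j(t\mid u)\frac{\tilde S(u-)}{\tilde S(s)}(\tilde H-H)(du)+\int_{(s,t]}\frac{\tilde S(u-)}{\tilde S(s)}(H_j-\tilde H_j)(du)\\ &\quad+\frac{1}{\tilde S(s)}\int_{(s,t]}\big(F_j(t\mid u)-P(T\le t,D=j\mid\tilde T=u,\tilde D=0)\big)\tilde F_0(du). \end{aligned} $$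
   Context: Functions of the event time: - $S(t)=P(T>t)$. - $F_j(t)=P(T\le t,D=j)$. - $F_j(t\mid u)=P(T\le t,D=j\mid T>u)=(F_j(t)-F_j(u))/S(u)$ for $t\ge u$. - $H_j(t)=\int_{(0,t]}S(s-)^{-1}F_j(ds)$, and $H=\sum_{j=1}^dH_j$. Observed quantities: - $\tilde S(t)=P(\tilde T>t)$. - $\tilde F_j(t)=P(\tilde T\le t,\tilde D=j)$ for $j=0,\dots,d$. - $\tilde H_j(t)=\int_{(0,t]}\tilde S(s-)^{-1}\tilde F_j(ds)$, and $\tilde H=\sum_{j=1}^d\tilde H_j$. - Division by $0$ occurs only on null sets of the integrator. - $\mathcal J=\{t\ge0:\tilde S(t)>0\}$. $P(\cdot\mid\tilde T=u,\tilde D=0)$ is a regular conditional probability, determined $\tilde F_0$-a.e. *)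

theory Defs
  imports "HOL-Probability.Probability"
begin

definition surv :: "'a measure \<Rightarrow> ('a \<Rightarrow> real) \<Rightarrow> real \<Rightarrow> real" where
  "surv M X t = measure M {\<omega> \<in> space M. X \<omega> > t}"

definition surv_left :: "'a measure \<Rightarrow> ('a \<Rightarrow> real) \<Rightarrow> real \<Rightarrow> real" where
  "surv_left M X t = Lim (at_left t) (surv M X)"

definition cif :: "'a measure \<Rightarrow> ('a \<Rightarrow> real) \<Rightarrow> ('a \<Rightarrow> nat) \<Rightarrow> nat \<Rightarrow> real \<Rightarrow> real" where
  "cif M X E j t = measure M {\<omega> \<in> space M. X \<omega> \<le> t \<and> E \<omega> = j}"

definition cond_cif :: "'a measure \<Rightarrow> ('a \<Rightarrow> real) \<Rightarrow> ('a \<Rightarrow> nat) \<Rightarrow> nat \<Rightarrow> real \<Rightarrow> real \<Rightarrow> real" where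
  "cond_cif M X E j t u = (cif M X E j t - cif M X E j u) / surv M X u"

definition cif_meas :: "'a measure \<Rightarrow> ('a \<Rightarrow> real) \<Rightarrow> ('a \<Rightarrow> nat) \<Rightarrow> nat \<Rightarrow> real measure" where
  "cif_meas M X E j = measure_of UNIV (sets borel)
      (\<lambda>A. emeasure M {\<omega> \<in> space M. X \<omega> \<in> A \<and> E \<omega> = j})"

text \<open>Cause-specific cumulative hazard measure H_j(du) = S(u-)^{-1} F_j(du)
  (division by zero yields 0, which only happens on F_j-null sets).\<close>
definition haz_meas :: "'a measure \<Rightarrow> ('a \<Rightarrow> real) \<Rightarrow> ('a \<Rightarrow> nat) \<Rightarrow> nat \<Rightarrow> real measure" where
  "haz_meas M X E j = density (cif_meas M X E j) (\<lambda>u. ennreal (1 / surv_left M X u))"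

end

theory Submission
  imports Defs "HOL-Probability.Probability"
begin

lemma le_meas[measurable]: "Measurable.pred (borel \<Otimes>\<^sub>M borel) (\<lambda>p::real\<times>real. fst p \<le> snd p)"
  by measurable
lemma lt_meas[measurable]: "Measurable.pred (borel \<Otimes>\<^sub>M borel) (\<lambda>p::real\<times>real. fst p < snd p)"
  by measurable
lemma prod_rule:
  fixes \<mu> :: "real measure" and f :: "real \<Rightarrow> ennreal"
  assumes fin: "finite_measure \<mu>" and sets[measurable_cong]: "sets \<mu> = sets borel"
    and f[measurable]: "f \<in> borel_measurable borel"
  shows "(\<integral>\<^sup>+x. indicator {s<..b} x * f x \<partial>\<mu>) * emeasure \<mu> {s<..b}
       = (\<integral>\<^sup>+u. indicator {s<..b} u * (\<integral>\<^sup>+x. indicator {s<..u} x * f x \<partial>\<mu>) \<partial>\<mu>)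
       + (\<integral>\<^sup>+u. indicator {s<..b} u * emeasure \<mu> {s<..<u} * f u \<partial>\<mu>)"
proof -
  interpret finite_measure \<mu> by fact
  have PS: "pair_sigma_finite \<mu> \<mu>"
    using fin by (simp add: pair_sigma_finite_def finite_measure_def)
  have sp: "sets (\<mu> \<Otimes>\<^sub>M \<mu>) = sets (borel \<Otimes>\<^sub>M borel)"
    by (rule sets_pair_measure_cong; simp add: sets)
  have em: "emeasure \<mu> A = (\<integral>\<^sup>+y. indicator A y \<partial>\<mu>)" if "A \<in> sets borel" for A
    using that sets by simp
  have "(\<integral>\<^sup>+x. indicator {s<..b} x * f x \<partial>\<mu>) * emeasure \<mu> {s<..b}
      = (\<integral>\<^sup>+x. (\<integral>\<^sup>+y. indicator {s<..b} x * f x * indicator {s<..b} y \<partial>\<mu>) \<partial>\<mu>)"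
    apply (subst em[of "{s<..b}"], simp)
    apply (subst nn_integral_multc[symmetric])
     apply measurable
    apply (intro nn_integral_cong)
    apply (subst nn_integral_cmult[symmetric])
     apply measurable
    done
  also have "\<dots> = (\<integral>\<^sup>+x. (\<integral>\<^sup>+y. indicator {s<..b} x * f x * indicator {s<..b} y * (if x \<le> y then 1 else 0)
        + indicator {s<..b} x * f x * indicator {s<..b} y * (if y < x then 1 else 0) \<partial>\<mu>) \<partial>\<mu>)"
    by (intro nn_integral_cong) (auto simp: indicator_def)
  also have "\<dots> = (\<integral>\<^sup>+x. (\<integral>\<^sup>+y. indicator {s<..b} x * f x * indicator {s<..b} y * (if x \<le> y then 1 else 0) \<partial>\<mu>) \<partial>\<mu>)
      + (\<integral>\<^sup>+x. (\<integral>\<^sup>+y. indicator {s<..b} x * f x * indicator {s<..b} y * (if y < x then 1 else 0) \<partial>\<mu>) \<partial>\<mu>)"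
  proof -
    have m1: "(\<lambda>x. \<integral>\<^sup>+y. indicator {s<..b} x * f x * indicator {s<..b} y * (if x \<le> y then 1 else 0) \<partial>\<mu>) \<in> borel_measurable \<mu>"
      by measurable
    have m2: "(\<lambda>x. \<integral>\<^sup>+y. indicator {s<..b} x * f x * indicator {s<..b} y * (if y < x then 1 else 0) \<partial>\<mu>) \<in> borel_measurable \<mu>"
      by measurable
    show ?thesis
      apply (subst nn_integral_add[OF m1 m2, symmetric])
      apply (intro nn_integral_cong)
      apply (rule nn_integral_add)
       apply measurable
      done
  qed
  also have "(\<integral>\<^sup>+x. (\<integral>\<^sup>+y. indicator {s<..b} x * f x * indicator {s<..b} y * (if x \<le> y then 1 else 0) \<partial>\<mu>) \<partial>\<mu>)
     = (\<integral>\<^sup>+y. (\<integral>\<^sup>+x. indicator {s<..b} x * f x * indicator {s<..b} y * (if x \<le> y then 1 else 0) \<partial>\<mu>) \<partial>\<mu>)"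
  proof -
    have mf2: "(\<lambda>(x,y). indicator {s<..b} x * f x * indicator {s<..b} y * (if x \<le> y then 1 else 0::ennreal)) \<in> borel_measurable (\<mu> \<Otimes>\<^sub>M \<mu>)"
      by measurable
    show ?thesis using pair_sigma_finite.Fubini'[OF PS mf2] by simp
  qed
  also have "\<dots> = (\<integral>\<^sup>+u. indicator {s<..b} u * (\<integral>\<^sup>+x. indicator {s<..u} x * f x \<partial>\<mu>) \<partial>\<mu>)"
    apply (intro nn_integral_cong)
    apply (subst nn_integral_cmult[symmetric])
     apply measurable
    apply (intro nn_integral_cong)
    apply (auto simp: indicator_def)
    done
  also have "(\<integral>\<^sup>+x. (\<integral>\<^sup>+y. indicator {s<..b} x * f x * indicator {s<..b} y * (if y < x then 1 else 0) \<partial>\<mu>) \<partial>\<mu>)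
      = (\<integral>\<^sup>+u. indicator {s<..b} u * emeasure \<mu> {s<..<u} * f u \<partial>\<mu>)"
  proof (intro nn_integral_cong)
    fix x
    have "(\<integral>\<^sup>+y. indicator {s<..b} x * f x * indicator {s<..b} y * (if y < x then 1 else 0) \<partial>\<mu>)
       = (\<integral>\<^sup>+y. (indicator {s<..b} x * f x) * indicator {s<..<x} y \<partial>\<mu>)"
      by (intro nn_integral_cong) (auto simp: indicator_def)
    also have "\<dots> = (indicator {s<..b} x * f x) * emeasure \<mu> {s<..<x}"
      using sets by (subst nn_integral_cmult) auto
    finally show "(\<integral>\<^sup>+y. indicator {s<..b} x * f x * indicator {s<..b} y * (if y < x then 1 else 0) \<partial>\<mu>)
       = indicator {s<..b} x * emeasure \<mu> {s<..<x} * f x" by (simp add: mult_ac)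
  qed
  finally show ?thesis .
qed


lemma meas_mono_fun:
  fixes \<mu> :: "real measure"
  assumes fin: "finite_measure \<mu>" and sets: "sets \<mu> = sets borel"
  shows "(\<lambda>u. emeasure \<mu> {s<..u}) \<in> borel_measurable borel"
    and "(\<lambda>u. emeasure \<mu> {s<..<u}) \<in> borel_measurable borel"
proof -
  interpret finite_measure \<mu> by fact
  have "mono (\<lambda>u. measure \<mu> {s<..u})"
    by (auto simp: mono_def sets intro!: finite_measure_mono)
  then have "(\<lambda>u. measure \<mu> {s<..u}) \<in> borel_measurable borel" by (rule borel_measurable_mono)
  then show "(\<lambda>u. emeasure \<mu> {s<..u}) \<in> borel_measurable borel"
    by (simp add: emeasure_eq_measure)
  have "mono (\<lambda>u. measure \<mu> {s<..<u})"
    by (auto simp: mono_def sets intro!: finite_measure_mono)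
  then have "(\<lambda>u. measure \<mu> {s<..<u}) \<in> borel_measurable borel" by (rule borel_measurable_mono)
  then show "(\<lambda>u. emeasure \<mu> {s<..<u}) \<in> borel_measurable borel"
    by (simp add: emeasure_eq_measure)
qed

lemma sum_step:
  fixes x y :: ennreal
  shows "x ^ Suc n + y * (\<Sum>p\<le>n. x ^ p * y ^ (n - p)) = (\<Sum>p\<le>Suc n. x ^ p * y ^ (Suc n - p))"
proof -
  have "(\<Sum>p\<le>Suc n. x ^ p * y ^ (Suc n - p)) = (\<Sum>p\<le>n. x ^ p * y ^ (Suc n - p)) + x ^ Suc n"
    by (subst sum.atMost_Suc) simp
  also have "(\<Sum>p\<le>n. x ^ p * y ^ (Suc n - p)) = (\<Sum>p\<le>n. y * (x ^ p * y ^ (n - p)))"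
    by (intro sum.cong refl) (simp add: Suc_diff_le mult_ac)
  also have "\<dots> = y * (\<Sum>p\<le>n. x ^ p * y ^ (n - p))" by (simp add: sum_distrib_left)
  finally show ?thesis by (metis add.commute)
qed

lemma Jn:
  fixes \<mu> :: "real measure"
  assumes fin: "finite_measure \<mu>" and sets[measurable_cong]: "sets \<mu> = sets borel"
  shows "(\<integral>\<^sup>+u. indicator {s<..b} u * (\<Sum>p\<le>n. emeasure \<mu> {s<..u} ^ p * emeasure \<mu> {s<..<u} ^ (n - p)) \<partial>\<mu>)
         = emeasure \<mu> {s<..b} ^ Suc n"
proof (induction n arbitrary: b)
  case 0
  then show ?case using sets by simp
next
  case (Suc n)
  note mf[measurable] = meas_mono_fun[OF fin sets, of s]
  define f where "f = (\<lambda>u. (\<Sum>p\<le>n. emeasure \<mu> {s<..u} ^ p * emeasure \<mu> {s<..<u} ^ (n - p)))"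
  have fm: "f \<in> borel_measurable borel" unfolding f_def by measurable
  have IH: "(\<integral>\<^sup>+u. indicator {s<..b} u * f u \<partial>\<mu>) = emeasure \<mu> {s<..b} ^ Suc n" for b
    unfolding f_def by (rule Suc.IH)
  have "emeasure \<mu> {s<..b} ^ Suc (Suc n) = emeasure \<mu> {s<..b} ^ Suc n * emeasure \<mu> {s<..b}"
    by (simp add: mult.commute)
  also have "\<dots> = (\<integral>\<^sup>+u. indicator {s<..b} u * (\<integral>\<^sup>+x. indicator {s<..u} x * f x \<partial>\<mu>) \<partial>\<mu>)
       + (\<integral>\<^sup>+u. indicator {s<..b} u * emeasure \<mu> {s<..<u} * f u \<partial>\<mu>)"
    by (subst IH[symmetric]) (rule prod_rule[OF fin sets fm])
  also have "\<dots> = (\<integral>\<^sup>+u. indicator {s<..b} u * emeasure \<mu> {s<..u} ^ Suc n \<partial>\<mu>)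
       + (\<integral>\<^sup>+u. indicator {s<..b} u * emeasure \<mu> {s<..<u} * f u \<partial>\<mu>)"
    by (simp only: IH)
  also have "\<dots> = (\<integral>\<^sup>+u. indicator {s<..b} u * (emeasure \<mu> {s<..u} ^ Suc n + emeasure \<mu> {s<..<u} * f u) \<partial>\<mu>)"
  proof -
    have m1: "(\<lambda>u. indicator {s<..b} u * emeasure \<mu> {s<..u} ^ Suc n) \<in> borel_measurable \<mu>" by measurable
    have m2: "(\<lambda>u. indicator {s<..b} u * emeasure \<mu> {s<..<u} * f u) \<in> borel_measurable \<mu>"
      using fm by measurable
    show ?thesis
      apply (subst nn_integral_add[OF m1 m2, symmetric])
      apply (intro nn_integral_cong)
      apply (simp add: distrib_left mult.assoc)
      done
  qed
  also have "\<dots> = (\<integral>\<^sup>+u. indicator {s<..b} u * (\<Sum>p\<le>Suc n. emeasure \<mu> {s<..u} ^ p * emeasure \<mu> {s<..<u} ^ (Suc n - p)) \<partial>\<mu>)"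
    unfolding f_def sum_step ..
  finally show ?case ..
qed


lemma geo1:
  fixes x S :: real
  assumes "0 \<le> x" "x < S"
  shows "(\<lambda>p. x ^ p / S ^ Suc p) sums (1 / (S - x))"
proof -
  have S: "S > 0" using assms by simp
  have "norm (x / S) < 1" using assms S by (simp add: abs_of_nonneg divide_less_eq)
  from sums_mult[OF geometric_sums[OF this], of "1/S"]
  have "(\<lambda>n. 1 / S * (x / S) ^ n) sums (1 / S * (1 / (1 - x / S)))" .
  moreover have "(\<lambda>n. 1 / S * (x / S) ^ n) = (\<lambda>p. x ^ p / S ^ Suc p)"
    by (auto simp: power_divide)
  moreover have "1 / S * (1 / (1 - x / S)) = 1 / (S - x)"
    using S assms by (simp add: field_simps)
  ultimately show ?thesis by simp
qed

lemma geo2: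
  fixes x y S :: real
  assumes "0 \<le> x" "x < S" "0 \<le> y" "y < S"
  shows "(\<lambda>n. (\<Sum>p\<le>n. x ^ p * y ^ (n - p)) / S ^ (Suc (Suc n))) sums (1 / ((S - x) * (S - y)))"
proof -
  have S: "S > 0" using assms by simp
  let ?a = "\<lambda>p. x ^ p / S ^ Suc p" and ?b = "\<lambda>p. y ^ p / S ^ Suc p"
  have a: "?a sums (1 / (S - x))" and b: "?b sums (1 / (S - y))" using geo1 assms by auto
  have na: "summable (\<lambda>k. norm (?a k))" using a S assms by (simp add: sums_iff abs_of_nonneg)
  have nb: "summable (\<lambda>k. norm (?b k))" using b S assms by (simp add: sums_iff abs_of_nonneg)
  from Cauchy_product_sums[OF na nb]
  have "(\<lambda>k. \<Sum>i\<le>k. ?a i * ?b (k - i)) sums (1 / (S - x) * (1 / (S - y)))"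
    using a b by (simp add: sums_iff)
  moreover have "(\<lambda>k. \<Sum>i\<le>k. ?a i * ?b (k - i)) = (\<lambda>n. (\<Sum>p\<le>n. x ^ p * y ^ (n - p)) / S ^ (Suc (Suc n)))"
  proof
    fix n
    have "(\<Sum>i\<le>n. ?a i * ?b (n - i)) = (\<Sum>i\<le>n. x ^ i * y ^ (n - i) / S ^ (Suc (Suc n)))"
    proof (intro sum.cong refl)
      fix i assume "i \<in> {..n}"
      then have "S ^ Suc i * S ^ Suc (n - i) = S ^ Suc (Suc n)"
        by (simp add: power_add[symmetric])
      then show "?a i * ?b (n - i) = x ^ i * y ^ (n - i) / S ^ (Suc (Suc n))"
        by (metis times_divide_times_eq)
    qed
    also have "\<dots> = (\<Sum>p\<le>n. x ^ p * y ^ (n - p)) / S ^ (Suc (Suc n))"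
      by (simp add: sum_divide_distrib)
    finally show "(\<Sum>i\<le>n. ?a i * ?b (n - i)) = (\<Sum>p\<le>n. x ^ p * y ^ (n - p)) / S ^ (Suc (Suc n))" .
  qed
  ultimately show ?thesis by simp
qed


lemma Kgen:
  fixes \<mu> :: "real measure"
  assumes fin: "finite_measure \<mu>" and sets[measurable_cong]: "sets \<mu> = sets borel"
    and S0: "measure \<mu> {s<..b} < S0"
  shows "ennreal (1/S0) + (\<integral>\<^sup>+u. indicator {s<..b} u *
            ennreal (1 / ((S0 - measure \<mu> {s<..u}) * (S0 - measure \<mu> {s<..<u}))) \<partial>\<mu>)
         = ennreal (1 / (S0 - measure \<mu> {s<..b}))"
proof -
  interpret finite_measure \<mu> by fact
  note mf[measurable] = meas_mono_fun[OF fin sets, of s]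
  have S0pos: "S0 > 0" using S0 measure_nonneg[of \<mu> "{s<..b}"] by linarith
  define g where "g n u = indicator {s<..b} u * (\<Sum>p\<le>n. emeasure \<mu> {s<..u} ^ p * emeasure \<mu> {s<..<u} ^ (n - p))
       * ennreal (1 / S0 ^ Suc (Suc n))" for n u
  have gm[measurable]: "g n \<in> borel_measurable \<mu>" for n unfolding g_def by measurable
  have pt: "indicator {s<..b} u * ennreal (1 / ((S0 - measure \<mu> {s<..u}) * (S0 - measure \<mu> {s<..<u})))
       = (\<Sum>n. g n u)" for u
  proof (cases "u \<in> {s<..b}")
    case True
    let ?x = "measure \<mu> {s<..u}" and ?y = "measure \<mu> {s<..<u}"
    have "?x \<le> measure \<mu> {s<..b}" using True sets by (intro finite_measure_mono) auto
    moreover have "?y \<le> ?x" using sets by (intro finite_measure_mono) auto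
    ultimately have xy: "0 \<le> ?x" "?x < S0" "0 \<le> ?y" "?y < S0" using S0 by auto
    have "(\<Sum>n. ennreal ((\<Sum>p\<le>n. ?x ^ p * ?y ^ (n - p)) / S0 ^ (Suc (Suc n))))
          = ennreal (1 / ((S0 - ?x) * (S0 - ?y)))"
      by (rule suminf_ennreal_eq[OF _ geo2[OF xy]]) (use xy S0pos in \<open>auto intro!: sum_nonneg divide_nonneg_nonneg\<close>)
    moreover have "ennreal ((\<Sum>p\<le>n. ?x ^ p * ?y ^ (n - p)) / S0 ^ (Suc (Suc n))) = g n u" for n
    proof -
      have "ennreal ((\<Sum>p\<le>n. ?x ^ p * ?y ^ (n - p)) / S0 ^ (Suc (Suc n)))
          = ennreal (\<Sum>p\<le>n. ?x ^ p * ?y ^ (n - p)) * ennreal (1 / S0 ^ (Suc (Suc n)))"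
        using S0pos by (subst ennreal_mult[symmetric]) (auto intro!: sum_nonneg simp: xy)
      also have "ennreal (\<Sum>p\<le>n. ?x ^ p * ?y ^ (n - p)) = (\<Sum>p\<le>n. ennreal ?x ^ p * ennreal ?y ^ (n - p))"
        using xy by (subst sum_ennreal[symmetric]) (auto simp: ennreal_mult ennreal_power)
      finally show ?thesis using True by (simp add: g_def emeasure_eq_measure)
    qed
    ultimately show ?thesis using True by simp
  next
    case False
    then show ?thesis by (simp add: g_def)
  qed
  have int_g: "integral\<^sup>N \<mu> (g n) = ennreal (measure \<mu> {s<..b} ^ Suc n / S0 ^ Suc (Suc n))" for n
  proof -
    have "integral\<^sup>N \<mu> (g n) = (\<integral>\<^sup>+u. indicator {s<..b} u * (\<Sum>p\<le>n. emeasure \<mu> {s<..u} ^ p * emeasure \<mu> {s<..<u} ^ (n - p)) \<partial>\<mu>)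
       * ennreal (1 / S0 ^ Suc (Suc n))"
      unfolding g_def by (rule nn_integral_multc) measurable
    also have "\<dots> = emeasure \<mu> {s<..b} ^ Suc n * ennreal (1 / S0 ^ Suc (Suc n))"
      by (simp only: Jn[OF fin sets])
    also have "\<dots> = ennreal (measure \<mu> {s<..b} ^ Suc n / S0 ^ Suc (Suc n))"
      using S0pos by (simp add: emeasure_eq_measure ennreal_power ennreal_mult[symmetric])
    finally show ?thesis .
  qed
  have "(\<integral>\<^sup>+u. indicator {s<..b} u *
            ennreal (1 / ((S0 - measure \<mu> {s<..u}) * (S0 - measure \<mu> {s<..<u}))) \<partial>\<mu>)
        = (\<Sum>n. integral\<^sup>N \<mu> (g n))"
    by (simp only: pt nn_integral_suminf[OF gm])
  also have "\<dots> = (\<Sum>n. ennreal (measure \<mu> {s<..b} ^ Suc n / S0 ^ Suc (Suc n)))"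
    by (simp only: int_g)
  also have "\<dots> = ennreal (measure \<mu> {s<..b} / S0 * (1 / (S0 - measure \<mu> {s<..b})))"
  proof (rule suminf_ennreal_eq)
    let ?m = "measure \<mu> {s<..b}"
    show "0 \<le> ?m ^ Suc n / S0 ^ Suc (Suc n)" for n using S0pos by simp
    have "(\<lambda>p. ?m / S0 * (?m ^ p / S0 ^ Suc p)) sums (?m / S0 * (1 / (S0 - ?m)))"
      by (rule sums_mult[OF geo1]) (use S0 in auto)
    moreover have "(\<lambda>p. ?m / S0 * (?m ^ p / S0 ^ Suc p)) = (\<lambda>n. ?m ^ Suc n / S0 ^ Suc (Suc n))"
      by (auto simp: field_simps)
    ultimately show "(\<lambda>n. ?m ^ Suc n / S0 ^ Suc (Suc n)) sums (?m / S0 * (1 / (S0 - ?m)))" by simp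
  qed
  finally have eq: "(\<integral>\<^sup>+u. indicator {s<..b} u *
            ennreal (1 / ((S0 - measure \<mu> {s<..u}) * (S0 - measure \<mu> {s<..<u}))) \<partial>\<mu>)
       = ennreal (measure \<mu> {s<..b} / S0 * (1 / (S0 - measure \<mu> {s<..b})))" .
  have "ennreal (1/S0) + ennreal (measure \<mu> {s<..b} / S0 * (1 / (S0 - measure \<mu> {s<..b})))
      = ennreal (1/S0 + measure \<mu> {s<..b} / S0 * (1 / (S0 - measure \<mu> {s<..b})))"
    using S0 S0pos by (subst ennreal_plus) auto
  also have "1/S0 + measure \<mu> {s<..b} / S0 * (1 / (S0 - measure \<mu> {s<..b})) = 1 / (S0 - measure \<mu> {s<..b})"
    using S0 S0pos by (simp add: field_simps)
  finally show ?thesis using eq by simp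
qed


lemma surv_left_eq:
  fixes X :: "'a \<Rightarrow> real"
  assumes P: "prob_space M" and X[measurable]: "X \<in> borel_measurable M"
  shows "surv_left M X u = measure M {\<omega> \<in> space M. u \<le> X \<omega>}"
proof -
  interpret prob_space M by fact
  let ?L = "measure M {\<omega> \<in> space M. u \<le> X \<omega>}"
  define A where "A n = {\<omega> \<in> space M. u - 1 / Suc n < X \<omega>}" for n :: nat
  have A[measurable]: "A n \<in> sets M" for n unfolding A_def by measurable
  have dec: "decseq A"
    unfolding decseq_def
  proof (intro allI impI subsetI)
    fix m n x assume mn: "m \<le> n" and x: "x \<in> A n"
    have "1 / real (Suc n) \<le> 1 / real (Suc m)" using mn by (intro divide_left_mono) auto
    then show "x \<in> A m" using x by (auto simp: A_def)
  qed
  have inter: "(\<Inter>n. A n) = {\<omega> \<in> space M. u \<le> X \<omega>}"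
  proof (intro set_eqI iffI)
    fix \<omega> assume "\<omega> \<in> (\<Inter>n. A n)"
    then have sp: "\<omega> \<in> space M" and h: "\<And>n. u - 1 / Suc n < X \<omega>" by (auto simp: A_def)
    show "\<omega> \<in> {\<omega> \<in> space M. u \<le> X \<omega>}"
    proof (rule ccontr)
      assume "\<omega> \<notin> {\<omega> \<in> space M. u \<le> X \<omega>}"
      then have "X \<omega> < u" using sp by auto
      then obtain n where "1 / Suc n < u - X \<omega>"
        using nat_approx_posE[of "u - X \<omega>"] by auto
      with h[of n] show False by simp
    qed
  next
    fix \<omega> assume "\<omega> \<in> {\<omega> \<in> space M. u \<le> X \<omega>}"
    then have sp: "\<omega> \<in> space M" and h: "u \<le> X \<omega>" by auto
    have "u - 1 / Suc n < X \<omega>" for n :: nat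
    proof -
      have "0 < 1 / real (Suc n)" by simp
      then show ?thesis using h by linarith
    qed
    then show "\<omega> \<in> (\<Inter>n. A n)" using sp by (auto simp: A_def)
  qed
  have lim: "(\<lambda>n. measure M (A n)) \<longlonglongrightarrow> ?L"
  proof -
    have "range A \<subseteq> sets M" using A by auto
    from finite_Lim_measure_decseq[OF this dec] show ?thesis unfolding inter .
  qed
  have "(surv M X \<longlongrightarrow> ?L) (at_left u)"
  proof (rule order_tendstoI)
    fix a assume "a < ?L"
    have "eventually (\<lambda>v. v \<in> {u - 1<..<u}) (at_left u)" by (rule eventually_at_left_real) simp
    then show "eventually (\<lambda>v. a < surv M X v) (at_left u)"
    proof (rule eventually_mono)
      fix v assume "v \<in> {u - 1<..<u}"
      then have "?L \<le> surv M X v"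
        unfolding surv_def by (intro finite_measure_mono) auto
      then show "a < surv M X v" using \<open>a < ?L\<close> by simp
    qed
  next
    fix a assume "?L < a"
    from order_tendstoD(2)[OF lim this] obtain n where n: "measure M (A n) < a"
      by (auto simp: eventually_sequentially)
    have "eventually (\<lambda>v. v \<in> {u - 1 / Suc n<..<u}) (at_left u)" by (rule eventually_at_left_real) simp
    then show "eventually (\<lambda>v. surv M X v < a) (at_left u)"
    proof (rule eventually_mono)
      fix v assume "v \<in> {u - 1 / Suc n<..<u}"
      then have "surv M X v \<le> measure M (A n)"
        unfolding surv_def A_def by (intro finite_measure_mono) auto
      then show "surv M X v < a" using n by simp
    qed
  qed
  then show ?thesis unfolding surv_left_def by (intro tendsto_Lim) simp_all
qed

lemma AE_pos:
  fixes X :: "'a \<Rightarrow> real"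
  assumes P: "prob_space M" and X[measurable]: "X \<in> borel_measurable M"
  shows "AE \<omega> in M. 0 < measure M {\<omega>' \<in> space M. X \<omega> \<le> X \<omega>'}"
proof -
  interpret prob_space M by fact
  define F where "F r = measure M {\<omega>' \<in> space M. r \<le> X \<omega>'}" for r
  define Z where "Z = {r. F r = 0}"
  have Fmono: "F r' \<le> F r" if "r \<le> r'" for r r'
    unfolding F_def
    apply (rule finite_measure_mono)
    using that apply (force intro: order_trans)
    apply measurable
    done
  have up: "r' \<in> Z" if "r \<in> Z" "r \<le> r'" for r r'
    using Fmono[OF that(2)] that(1) measure_nonneg[of M] by (auto simp: Z_def F_def intro: antisym)
  have null: "{\<omega>' \<in> space M. r \<le> X \<omega>'} \<in> null_sets M" if "r \<in> Z" for r
    using that by (auto simp: Z_def F_def emeasure_eq_measure null_sets_def)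
  have "\<exists>N\<in>null_sets M. {\<omega> \<in> space M. X \<omega> \<in> Z} \<subseteq> N"
  proof (cases "Z = {}")
    case True then show ?thesis by (intro bexI[of _ "{}"]) auto
  next
    case False
    show ?thesis
    proof (cases "bdd_below Z")
      case False
      have "\<forall>n::nat. - real n \<in> Z"
      proof
        fix n :: nat
        from False obtain z where "z \<in> Z" "z < - real n"
          unfolding bdd_below_def by (metis not_le)
        then show "- real n \<in> Z" using up by auto
      qed
      then have "(\<Union>n::nat. {\<omega>' \<in> space M. - real n \<le> X \<omega>'}) \<in> null_sets M"
        using null by (intro null_sets_UN) auto
      moreover have "(\<Union>n::nat. {\<omega>' \<in> space M. - real n \<le> X \<omega>'}) = space M"
      proof (intro set_eqI iffI)
        fix \<omega> assume "\<omega> \<in> space M"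
        obtain n :: nat where "- X \<omega> \<le> real n" using real_arch_simple by blast
        then show "\<omega> \<in> (\<Union>n::nat. {\<omega>' \<in> space M. - real n \<le> X \<omega>'})" using \<open>\<omega> \<in> space M\<close>
          by (intro UN_I[of n]) auto
      qed auto
      ultimately have "emeasure M (space M) = 0" by auto
      then show ?thesis by (simp add: emeasure_space_1)
    next
      case True
      define i where "i = Inf Z"
      have ile: "i \<le> z" if "z \<in> Z" for z using True that unfolding i_def by (simp add: cInf_lower)
      show ?thesis
      proof (cases "i \<in> Z")
        case True
        have "{\<omega> \<in> space M. X \<omega> \<in> Z} \<subseteq> {\<omega>' \<in> space M. i \<le> X \<omega>'}" using ile by auto
        then show ?thesis using null[OF True] by blast
      next
        case iZ: False
        have inZ: "i + 1 / Suc n \<in> Z" for n :: nat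
        proof -
          have "\<exists>z\<in>Z. z < i + 1 / Suc n"
            using cInf_less_iff[of Z "i + 1 / Suc n"] \<open>Z \<noteq> {}\<close> True unfolding i_def by simp
          then show ?thesis using up by (meson less_imp_le)
        qed
        have "(\<Union>n::nat. {\<omega>' \<in> space M. i + 1 / Suc n \<le> X \<omega>'}) \<in> null_sets M"
          using null inZ by (intro null_sets_UN) auto
        moreover have "{\<omega> \<in> space M. X \<omega> \<in> Z} \<subseteq> (\<Union>n::nat. {\<omega>' \<in> space M. i + 1 / Suc n \<le> X \<omega>'})"
        proof
          fix \<omega> assume "\<omega> \<in> {\<omega> \<in> space M. X \<omega> \<in> Z}"
          then have sp: "\<omega> \<in> space M" and xz: "X \<omega> \<in> Z" by auto
          have "i \<noteq> X \<omega>" using xz iZ by auto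
          then have "i < X \<omega>" using ile[OF xz] by simp
          then obtain n where "1 / Suc n < X \<omega> - i" using nat_approx_posE[of "X \<omega> - i"] by auto
          then show "\<omega> \<in> (\<Union>n::nat. {\<omega>' \<in> space M. i + 1 / Suc n \<le> X \<omega>'})" using sp
            by (intro UN_I[of n]) auto
        qed
        ultimately show ?thesis by blast
      qed
    qed
  qed
  then obtain N where N: "N \<in> null_sets M" "{\<omega> \<in> space M. X \<omega> \<in> Z} \<subseteq> N" by blast
  have "{\<omega> \<in> space M. \<not> 0 < measure M {\<omega>' \<in> space M. X \<omega> \<le> X \<omega>'}} \<subseteq> {\<omega> \<in> space M. X \<omega> \<in> Z}"
    using measure_nonneg[of M] by (auto simp: Z_def F_def intro: antisym)
  with N show ?thesis by (intro AE_I'[of N]) auto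
qed


lemma meas_mono_real:
  fixes \<mu> :: "real measure"
  assumes fin: "finite_measure \<mu>" and sets: "sets \<mu> = sets borel"
  shows "(\<lambda>u. measure \<mu> {s<..u}) \<in> borel_measurable borel"
    and "(\<lambda>u. measure \<mu> {s<..<u}) \<in> borel_measurable borel"
proof -
  interpret finite_measure \<mu> by fact
  have "mono (\<lambda>u. measure \<mu> {s<..u})"
    by (auto simp: mono_def sets intro!: finite_measure_mono)
  then show "(\<lambda>u. measure \<mu> {s<..u}) \<in> borel_measurable borel" by (rule borel_measurable_mono)
  have "mono (\<lambda>u. measure \<mu> {s<..<u})"
    by (auto simp: mono_def sets intro!: finite_measure_mono)
  then show "(\<lambda>u. measure \<mu> {s<..<u}) \<in> borel_measurable borel" by (rule borel_measurable_mono)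
qed

lemma Kgen_distr:
  fixes Y :: "'a \<Rightarrow> real"
  assumes P: "prob_space M" and Y[measurable]: "Y \<in> borel_measurable M"
    and S0: "measure M {\<omega> \<in> space M. s < Y \<omega> \<and> Y \<omega> \<le> b} < S0"
  shows "ennreal (1/S0) + (\<integral>\<^sup>+\<omega>. indicator {s<..b} (Y \<omega>) *
       ennreal (1 / ((S0 - measure M {\<omega>' \<in> space M. s < Y \<omega>' \<and> Y \<omega>' \<le> Y \<omega>})
                   * (S0 - measure M {\<omega>' \<in> space M. s < Y \<omega>' \<and> Y \<omega>' < Y \<omega>}))) \<partial>M)
     = ennreal (1 / (S0 - measure M {\<omega> \<in> space M. s < Y \<omega> \<and> Y \<omega> \<le> b}))"
proof -
  interpret prob_space M by fact
  define \<mu> where "\<mu> = distr M borel Y"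
  have fin: "finite_measure \<mu>" unfolding \<mu>_def
    using prob_space_distr[of Y borel] by (simp add: prob_space_def)
  have sets: "sets \<mu> = sets borel" unfolding \<mu>_def by simp
  have m1: "measure \<mu> {s<..u} = measure M {\<omega>' \<in> space M. s < Y \<omega>' \<and> Y \<omega>' \<le> u}" for u
    unfolding \<mu>_def by (subst measure_distr) (auto intro!: arg_cong[where f="measure M"])
  have m2: "measure \<mu> {s<..<u} = measure M {\<omega>' \<in> space M. s < Y \<omega>' \<and> Y \<omega>' < u}" for u
    unfolding \<mu>_def by (subst measure_distr) (auto intro!: arg_cong[where f="measure M"])
  note mm[measurable] = meas_mono_real[OF fin sets, of s]
  from Kgen[OF fin sets, of s b S0] S0
  have "ennreal (1/S0) + (\<integral>\<^sup>+u. indicator {s<..b} u *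
            ennreal (1 / ((S0 - measure \<mu> {s<..u}) * (S0 - measure \<mu> {s<..<u}))) \<partial>\<mu>)
         = ennreal (1 / (S0 - measure \<mu> {s<..b}))" by (simp add: m1)
  moreover have "(\<integral>\<^sup>+u. indicator {s<..b} u *
            ennreal (1 / ((S0 - measure \<mu> {s<..u}) * (S0 - measure \<mu> {s<..<u}))) \<partial>\<mu>)
     = (\<integral>\<^sup>+\<omega>. indicator {s<..b} (Y \<omega>) *
       ennreal (1 / ((S0 - measure \<mu> {s<..Y \<omega>}) * (S0 - measure \<mu> {s<..<Y \<omega>}))) \<partial>M)"
  proof -
    have fm: "(\<lambda>u. indicator {s<..b} u *
            ennreal (1 / ((S0 - measure \<mu> {s<..u}) * (S0 - measure \<mu> {s<..<u})))) \<in> borel_measurable borel"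
      by measurable
    have fm2: "(\<lambda>u. indicator {s<..b} u *
            ennreal (1 / ((S0 - measure \<mu> {s<..u}) * (S0 - measure \<mu> {s<..<u})))) \<in> borel_measurable (distr M borel Y)"
      using fm by (subst measurable_cong_sets[OF sets_distr refl])
    show ?thesis using nn_integral_distr[OF Y fm2] by (simp only: \<mu>_def)
  qed
  ultimately show ?thesis by (simp add: m1 m2)
qed


locale cr = prob_space M for M :: "'a measure" +
  fixes T :: "'a \<Rightarrow> real"
  assumes T[measurable]: "T \<in> borel_measurable M"
begin

abbreviation "S \<equiv> surv M T"
definition Sm where "Sm u = measure M {\<omega> \<in> space M. u \<le> T \<omega>}"

lemma S_eq: "S u = measure M {\<omega> \<in> space M. u < T \<omega>}"
  by (simp add: surv_def)

lemma S_anti: "u \<le> v \<Longrightarrow> S v \<le> S u"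
  unfolding S_eq by (rule finite_measure_mono) (auto, measurable)

lemma Sm_anti: "u \<le> v \<Longrightarrow> Sm v \<le> Sm u"
  unfolding Sm_def by (rule finite_measure_mono) (auto, measurable)

lemma S_le_Sm: "S u \<le> Sm u"
  unfolding Sm_def S_eq by (rule finite_measure_mono) (auto, measurable)

lemma Sm_le_S: "u < v \<Longrightarrow> Sm v \<le> S u"
  unfolding Sm_def S_eq by (rule finite_measure_mono) (auto, measurable)

lemma S_meas[measurable]: "S \<in> borel_measurable borel"
proof -
  have "mono (\<lambda>u. - S u)" by (auto simp: mono_def intro: S_anti)
  then have "(\<lambda>u. - (- S u)) \<in> borel_measurable borel"
    by (intro borel_measurable_uminus borel_measurable_mono)
  then show ?thesis by simp
qed

lemma Sm_meas[measurable]: "Sm \<in> borel_measurable borel"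
proof -
  have "mono (\<lambda>u. - Sm u)" by (auto simp: mono_def intro: Sm_anti)
  then have "(\<lambda>u. - (- Sm u)) \<in> borel_measurable borel"
    by (intro borel_measurable_uminus borel_measurable_mono)
  then show ?thesis by simp
qed

lemma S_diff: "s \<le> u \<Longrightarrow> measure M {\<omega> \<in> space M. s < T \<omega> \<and> T \<omega> \<le> u} = S s - S u"
proof -
  assume "s \<le> u"
  then have "{\<omega> \<in> space M. s < T \<omega> \<and> T \<omega> \<le> u} = {\<omega> \<in> space M. s < T \<omega>} - {\<omega> \<in> space M. u < T \<omega>}"
    by auto
  moreover have "{\<omega> \<in> space M. u < T \<omega>} \<subseteq> {\<omega> \<in> space M. s < T \<omega>}" using \<open>s \<le> u\<close> by auto
  ultimately show ?thesis unfolding S_eq by (simp add: finite_measure_Diff)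
qed

lemma Sm_diff: "s < u \<Longrightarrow> measure M {\<omega> \<in> space M. s < T \<omega> \<and> T \<omega> < u} = S s - Sm u"
proof -
  assume "s < u"
  then have "{\<omega> \<in> space M. s < T \<omega> \<and> T \<omega> < u} = {\<omega> \<in> space M. s < T \<omega>} - {\<omega> \<in> space M. u \<le> T \<omega>}"
    by auto
  moreover have "{\<omega> \<in> space M. u \<le> T \<omega>} \<subseteq> {\<omega> \<in> space M. s < T \<omega>}" using \<open>s < u\<close> by auto
  ultimately show ?thesis unfolding S_eq Sm_def by (simp add: finite_measure_Diff)
qed

lemma K2M:
  assumes "s \<le> w" "0 < S w"
  shows "ennreal (1 / S s) + (\<integral>\<^sup>+\<omega>. indicator {s<..w} (T \<omega>) * ennreal (1 / (S (T \<omega>) * Sm (T \<omega>))) \<partial>M)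
       = ennreal (1 / S w)"
proof -
  have lt: "measure M {\<omega> \<in> space M. s < T \<omega> \<and> T \<omega> \<le> w} < S s"
    using S_diff[OF assms(1)] assms(2) by simp
  have eq1: "(\<integral>\<^sup>+\<omega>. indicator {s<..w} (T \<omega>) * ennreal (1 / (S (T \<omega>) * Sm (T \<omega>))) \<partial>M)
     = (\<integral>\<^sup>+\<omega>. indicator {s<..w} (T \<omega>) *
       ennreal (1 / ((S s - measure M {\<omega>' \<in> space M. s < T \<omega>' \<and> T \<omega>' \<le> T \<omega>})
                   * (S s - measure M {\<omega>' \<in> space M. s < T \<omega>' \<and> T \<omega>' < T \<omega>}))) \<partial>M)"
  proof (intro nn_integral_cong)
    fix \<omega> show "indicator {s<..w} (T \<omega>) * ennreal (1 / (S (T \<omega>) * Sm (T \<omega>))) =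
      indicator {s<..w} (T \<omega>) *
       ennreal (1 / ((S s - measure M {\<omega>' \<in> space M. s < T \<omega>' \<and> T \<omega>' \<le> T \<omega>})
                   * (S s - measure M {\<omega>' \<in> space M. s < T \<omega>' \<and> T \<omega>' < T \<omega>})))"
      by (cases "T \<omega> \<in> {s<..w}") (simp_all add: S_diff Sm_diff)
  qed
  have e2: "S s - measure M {\<omega> \<in> space M. s < T \<omega> \<and> T \<omega> \<le> w} = S w"
    using S_diff[OF assms(1)] by simp
  show ?thesis using Kgen_distr[OF prob_space_axioms T lt] unfolding eq1 e2 .
qed

lemma K1M:
  assumes "s < y" "0 < Sm y"
  shows "ennreal (1 / S s) + (\<integral>\<^sup>+\<omega>. indicator {s<..<y} (T \<omega>) * ennreal (1 / (S (T \<omega>) * Sm (T \<omega>))) \<partial>M)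
       = ennreal (1 / Sm y)"
proof -
  define Y where "Y \<omega> = (if T \<omega> < y then T \<omega> else s)" for \<omega>
  have Y[measurable]: "Y \<in> borel_measurable M" unfolding Y_def by measurable
  have setY: "{\<omega>' \<in> space M. s < Y \<omega>' \<and> Y \<omega>' \<le> v} = {\<omega>' \<in> space M. s < T \<omega>' \<and> T \<omega>' \<le> v \<and> T \<omega>' < y}" for v
    by (auto simp: Y_def)
  have setY2: "{\<omega>' \<in> space M. s < Y \<omega>' \<and> Y \<omega>' < v} = {\<omega>' \<in> space M. s < T \<omega>' \<and> T \<omega>' < v \<and> T \<omega>' < y}" for v
    by (auto simp: Y_def)
  have b: "measure M {\<omega> \<in> space M. s < Y \<omega> \<and> Y \<omega> \<le> y} = S s - Sm y"
  proof -
    have "{\<omega> \<in> space M. s < Y \<omega> \<and> Y \<omega> \<le> y} = {\<omega> \<in> space M. s < T \<omega> \<and> T \<omega> < y}"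
      unfolding setY by auto
    then show ?thesis using Sm_diff[OF assms(1)] by simp
  qed
  have lt: "measure M {\<omega> \<in> space M. s < Y \<omega> \<and> Y \<omega> \<le> y} < S s"
    using b assms(2) by simp
  have eq1: "(\<integral>\<^sup>+\<omega>. indicator {s<..<y} (T \<omega>) * ennreal (1 / (S (T \<omega>) * Sm (T \<omega>))) \<partial>M)
     = (\<integral>\<^sup>+\<omega>. indicator {s<..y} (Y \<omega>) *
       ennreal (1 / ((S s - measure M {\<omega>' \<in> space M. s < Y \<omega>' \<and> Y \<omega>' \<le> Y \<omega>})
                   * (S s - measure M {\<omega>' \<in> space M. s < Y \<omega>' \<and> Y \<omega>' < Y \<omega>}))) \<partial>M)"
  proof (intro nn_integral_cong)
    fix \<omega>
    show "indicator {s<..<y} (T \<omega>) * ennreal (1 / (S (T \<omega>) * Sm (T \<omega>))) =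
      indicator {s<..y} (Y \<omega>) *
       ennreal (1 / ((S s - measure M {\<omega>' \<in> space M. s < Y \<omega>' \<and> Y \<omega>' \<le> Y \<omega>})
                   * (S s - measure M {\<omega>' \<in> space M. s < Y \<omega>' \<and> Y \<omega>' < Y \<omega>})))"
    proof (cases "T \<omega> \<in> {s<..<y}")
      case True
      then have Yw: "Y \<omega> = T \<omega>" by (simp add: Y_def)
      have e1: "{\<omega>' \<in> space M. s < T \<omega>' \<and> T \<omega>' \<le> T \<omega> \<and> T \<omega>' < y} = {\<omega>' \<in> space M. s < T \<omega>' \<and> T \<omega>' \<le> T \<omega>}"
        using True by auto
      have e2: "{\<omega>' \<in> space M. s < T \<omega>' \<and> T \<omega>' < T \<omega> \<and> T \<omega>' < y} = {\<omega>' \<in> space M. s < T \<omega>' \<and> T \<omega>' < T \<omega>}"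
        using True by auto
      show ?thesis using True unfolding Yw setY setY2 e1 e2
        by (simp add: S_diff Sm_diff)
    next
      case False
      then have "Y \<omega> \<notin> {s<..y}" by (auto simp: Y_def)
      then show ?thesis using False by simp
    qed
  qed
  have e2: "S s - measure M {\<omega> \<in> space M. s < Y \<omega> \<and> Y \<omega> \<le> y} = Sm y"
    using b by simp
  show ?thesis using Kgen_distr[OF prob_space_axioms Y lt] unfolding eq1 e2 .
qed

end


lemma pred_le_pair[measurable]:
  assumes [measurable]: "f \<in> borel_measurable M" "g \<in> borel_measurable M"
  shows "Measurable.pred M (\<lambda>x. (f x :: real) < g x)"
  by measurable

locale cr2 = cr +
  fixes D :: "'a \<Rightarrow> nat" and j :: nat and t :: real
  assumes D[measurable]: "D \<in> measurable M (count_space UNIV)"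
begin

abbreviation "c \<equiv> cond_cif M T D j t"
definition G where "G u = measure M {\<omega> \<in> space M. T \<omega> \<le> t \<and> D \<omega> = j \<and> u < T \<omega>}"
definition Aset where "Aset = {\<omega> \<in> space M. T \<omega> \<le> t \<and> D \<omega> = j}"

lemma Aset[measurable]: "Aset \<in> sets M" unfolding Aset_def by measurable

lemma c_eq: "u \<le> t \<Longrightarrow> c u = G u / S u"
proof -
  assume "u \<le> t"
  have "{\<omega> \<in> space M. T \<omega> \<le> t \<and> D \<omega> = j \<and> u < T \<omega>} =
        {\<omega> \<in> space M. T \<omega> \<le> t \<and> D \<omega> = j} - {\<omega> \<in> space M. T \<omega> \<le> u \<and> D \<omega> = j}"
    using \<open>u \<le> t\<close> by auto
  moreover have "{\<omega> \<in> space M. T \<omega> \<le> u \<and> D \<omega> = j} \<subseteq> {\<omega> \<in> space M. T \<omega> \<le> t \<and> D \<omega> = j}"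
    using \<open>u \<le> t\<close> by auto
  ultimately have "G u = cif M T D j t - cif M T D j u"
    unfolding G_def cif_def by (simp add: finite_measure_Diff)
  then show ?thesis by (simp add: cond_cif_def)
qed

lemma G_le: "G u \<le> S u"
  unfolding G_def S_eq by (rule finite_measure_mono) (auto, measurable)

lemma S_nonneg: "0 \<le> S u" by (simp add: S_eq)
lemma Sm_nonneg: "0 \<le> Sm u" by (simp add: Sm_def)
lemma G_nonneg: "0 \<le> G u" by (simp add: G_def)

lemma c_nonneg: "u \<le> t \<Longrightarrow> 0 \<le> c u"
  using S_nonneg[of u] G_nonneg[of u] by (simp add: c_eq)

lemma c_le1: "u \<le> t \<Longrightarrow> c u \<le> 1"
  using G_le[of u] S_nonneg[of u] G_nonneg[of u] by (cases "S u = 0") (simp_all add: c_eq)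

lemma c_t: "c t = 0"
  by (simp add: cond_cif_def)

lemma cif_meas[measurable]: "cif M T D j \<in> borel_measurable borel"
proof -
  have "mono (cif M T D j)" unfolding mono_def cif_def
    by (auto intro!: finite_measure_mono, measurable)
  then show ?thesis by (rule borel_measurable_mono)
qed

lemma c_meas[measurable]: "c \<in> borel_measurable borel"
  unfolding cond_cif_def[abs_def] by measurable

lemma c_ennreal: "u \<le> t \<Longrightarrow> ennreal (c u) = ennreal (1 / S u) * (\<integral>\<^sup>+\<omega>''. indicator Aset \<omega>'' * indicator {u<..} (T \<omega>'') \<partial>M)"
proof -
  assume ut: "u \<le> t"
  have "(\<integral>\<^sup>+\<omega>''. indicator Aset \<omega>'' * indicator {u<..} (T \<omega>'') \<partial>M) = (\<integral>\<^sup>+\<omega>''. indicator {\<omega> \<in> space M. T \<omega> \<le> t \<and> D \<omega> = j \<and> u < T \<omega>} \<omega>'' \<partial>M)"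
    by (intro nn_integral_cong) (auto simp: Aset_def indicator_def)
  also have "\<dots> = ennreal (G u)"
    unfolding G_def by (simp add: emeasure_eq_measure)
  finally have "(\<integral>\<^sup>+\<omega>''. indicator Aset \<omega>'' * indicator {u<..} (T \<omega>'') \<partial>M) = ennreal (G u)" .
  moreover have "c u = 1 / S u * G u" using c_eq[OF ut] by simp
  moreover have "ennreal (1 / S u * G u) = ennreal (1 / S u) * ennreal (G u)"
    using S_nonneg[of u] G_nonneg[of u] by (intro ennreal_mult) auto
  ultimately show ?thesis by simp
qed

end


context cr2
begin

lemma PS: "pair_sigma_finite M M"
  using prob_space_axioms by (simp add: pair_sigma_finite_def prob_space_def finite_measure_def)

lemma L_main:
  assumes sw: "s < w" and wt: "w \<le> t" and Smw: "0 < Sm w"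
  shows "ennreal (c s) + (\<integral>\<^sup>+\<omega>. indicator {s<..w} (T \<omega>) * ennreal (c (T \<omega>)) * ennreal (1 / Sm (T \<omega>)) \<partial>M)
       = ennreal (c w) + (\<integral>\<^sup>+\<omega>. indicator {s<..w} (T \<omega>) * indicator {\<omega>. D \<omega> = j} \<omega> * ennreal (1 / Sm (T \<omega>)) \<partial>M)"
proof -
  define \<phi> where "\<phi> u = ennreal (1 / (S u * Sm u))" for u
  have \<phi>m[measurable]: "\<phi> \<in> borel_measurable borel" unfolding \<phi>_def by measurable
  define F where "F p = indicator {s<..w} (T (fst p)) * \<phi> (T (fst p)) * (indicator Aset (snd p) * (if T (fst p) < T (snd p) then 1 else 0))" for p
  have Fm[measurable]: "F \<in> borel_measurable (M \<Otimes>\<^sub>M M)" unfolding F_def by measurable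
  define \<Psi> where "\<Psi> \<omega>'' = (\<integral>\<^sup>+\<omega>. indicator {s<..w} (T \<omega>) * (if T \<omega> < T \<omega>'' then 1 else 0) * \<phi> (T \<omega>) \<partial>M)" for \<omega>''
  have \<Psi>m[measurable]: "\<Psi> \<in> borel_measurable M" unfolding \<Psi>_def by measurable
  have st2: "(\<integral>\<^sup>+\<omega>. indicator {s<..w} (T \<omega>) * ennreal (c (T \<omega>)) * ennreal (1 / Sm (T \<omega>)) \<partial>M)
      = (\<integral>\<^sup>+\<omega>''. indicator Aset \<omega>'' * \<Psi> \<omega>'' \<partial>M)"
  proof -
    have "(\<integral>\<^sup>+\<omega>. indicator {s<..w} (T \<omega>) * ennreal (c (T \<omega>)) * ennreal (1 / Sm (T \<omega>)) \<partial>M)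
        = (\<integral>\<^sup>+\<omega>. (\<integral>\<^sup>+\<omega>''. F (\<omega>, \<omega>'') \<partial>M) \<partial>M)"
    proof (intro nn_integral_cong)
      fix \<omega>
      show "indicator {s<..w} (T \<omega>) * ennreal (c (T \<omega>)) * ennreal (1 / Sm (T \<omega>)) = (\<integral>\<^sup>+\<omega>''. F (\<omega>, \<omega>'') \<partial>M)"
      proof (cases "T \<omega> \<in> {s<..w}")
        case True
        then have Tt: "T \<omega> \<le> t" using wt by auto
        have "(\<integral>\<^sup>+\<omega>''. F (\<omega>, \<omega>'') \<partial>M) = \<phi> (T \<omega>) * (\<integral>\<^sup>+\<omega>''. indicator Aset \<omega>'' * indicator {T \<omega><..} (T \<omega>'') \<partial>M)"
          unfolding F_def using True
          by (subst nn_integral_cmult[symmetric]) (auto intro!: nn_integral_cong simp: indicator_def)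
        moreover have "\<phi> (T \<omega>) = ennreal (1 / S (T \<omega>)) * ennreal (1 / Sm (T \<omega>))"
          unfolding \<phi>_def using S_nonneg Sm_nonneg by (subst ennreal_mult[symmetric]) auto
        ultimately show ?thesis using True by (simp add: c_ennreal[OF Tt] mult_ac)
      next
        case False
        then show ?thesis by (simp add: F_def)
      qed
    qed
    also have "\<dots> = (\<integral>\<^sup>+\<omega>''. (\<integral>\<^sup>+\<omega>. F (\<omega>, \<omega>'') \<partial>M) \<partial>M)"
    proof -
      have Fm2: "(\<lambda>(x,y). F (x,y)) \<in> borel_measurable (M \<Otimes>\<^sub>M M)" unfolding case_prod_eta by (rule Fm)
      show ?thesis using pair_sigma_finite.Fubini'[OF PS Fm2] by simp
    qed
    also have "\<dots> = (\<integral>\<^sup>+\<omega>''. indicator Aset \<omega>'' * \<Psi> \<omega>'' \<partial>M)"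
    proof (intro nn_integral_cong)
      fix \<omega>''
      show "(\<integral>\<^sup>+\<omega>. F (\<omega>, \<omega>'') \<partial>M) = indicator Aset \<omega>'' * \<Psi> \<omega>''"
        unfolding \<Psi>_def F_def
        by (subst nn_integral_cmult[symmetric]) (auto intro!: nn_integral_cong simp: mult_ac)
    qed
    finally show ?thesis .
  qed
  have cform: "ennreal (c u) = (\<integral>\<^sup>+\<omega>''. indicator Aset \<omega>'' * (indicator {u<..} (T \<omega>'') * ennreal (1 / S u)) \<partial>M)"
    if "u \<le> t" for u
  proof -
    have "(\<integral>\<^sup>+\<omega>''. indicator Aset \<omega>'' * (indicator {u<..} (T \<omega>'') * ennreal (1 / S u)) \<partial>M)
       = (\<integral>\<^sup>+\<omega>''. (indicator Aset \<omega>'' * indicator {u<..} (T \<omega>'')) * ennreal (1 / S u) \<partial>M)"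
      by (simp only: mult.assoc)
    also have "\<dots> = (\<integral>\<^sup>+\<omega>''. indicator Aset \<omega>'' * indicator {u<..} (T \<omega>'') \<partial>M) * ennreal (1 / S u)"
      by (rule nn_integral_multc) measurable
    finally show ?thesis using c_ennreal[OF that] by (simp add: mult.commute)
  qed
  have st4: "(\<integral>\<^sup>+\<omega>. indicator {s<..w} (T \<omega>) * indicator {\<omega>. D \<omega> = j} \<omega> * ennreal (1 / Sm (T \<omega>)) \<partial>M)
     = (\<integral>\<^sup>+\<omega>''. indicator Aset \<omega>'' * (indicator {s<..w} (T \<omega>'') * ennreal (1 / Sm (T \<omega>''))) \<partial>M)"
    using wt by (intro nn_integral_cong) (auto simp: Aset_def indicator_def)
  have lhs: "ennreal (c s) + (\<integral>\<^sup>+\<omega>. indicator {s<..w} (T \<omega>) * ennreal (c (T \<omega>)) * ennreal (1 / Sm (T \<omega>)) \<partial>M)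
     = (\<integral>\<^sup>+\<omega>''. indicator Aset \<omega>'' * (indicator {s<..} (T \<omega>'') * ennreal (1 / S s) + \<Psi> \<omega>'') \<partial>M)"
  proof -
    have st: "s \<le> t" using sw wt by simp
    have "(\<integral>\<^sup>+\<omega>''. indicator Aset \<omega>'' * (indicator {s<..} (T \<omega>'') * ennreal (1 / S s) + \<Psi> \<omega>'') \<partial>M)
       = (\<integral>\<^sup>+\<omega>''. indicator Aset \<omega>'' * (indicator {s<..} (T \<omega>'') * ennreal (1 / S s)) + indicator Aset \<omega>'' * \<Psi> \<omega>'' \<partial>M)"
      by (simp only: distrib_left)
    also have "\<dots> = (\<integral>\<^sup>+\<omega>''. indicator Aset \<omega>'' * (indicator {s<..} (T \<omega>'') * ennreal (1 / S s)) \<partial>M)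
        + (\<integral>\<^sup>+\<omega>''. indicator Aset \<omega>'' * \<Psi> \<omega>'' \<partial>M)"
      by (rule nn_integral_add) measurable
    finally show ?thesis unfolding st2 cform[OF st] by simp
  qed
  have rhs: "ennreal (c w) + (\<integral>\<^sup>+\<omega>. indicator {s<..w} (T \<omega>) * indicator {\<omega>. D \<omega> = j} \<omega> * ennreal (1 / Sm (T \<omega>)) \<partial>M)
     = (\<integral>\<^sup>+\<omega>''. indicator Aset \<omega>'' * (indicator {w<..} (T \<omega>'') * ennreal (1 / S w)
            + indicator {s<..w} (T \<omega>'') * ennreal (1 / Sm (T \<omega>''))) \<partial>M)"
  proof -
    have "(\<integral>\<^sup>+\<omega>''. indicator Aset \<omega>'' * (indicator {w<..} (T \<omega>'') * ennreal (1 / S w)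
            + indicator {s<..w} (T \<omega>'') * ennreal (1 / Sm (T \<omega>''))) \<partial>M)
       = (\<integral>\<^sup>+\<omega>''. indicator Aset \<omega>'' * (indicator {w<..} (T \<omega>'') * ennreal (1 / S w))
            + indicator Aset \<omega>'' * (indicator {s<..w} (T \<omega>'') * ennreal (1 / Sm (T \<omega>''))) \<partial>M)"
      by (simp only: distrib_left)
    also have "\<dots> = (\<integral>\<^sup>+\<omega>''. indicator Aset \<omega>'' * (indicator {w<..} (T \<omega>'') * ennreal (1 / S w)) \<partial>M)
        + (\<integral>\<^sup>+\<omega>''. indicator Aset \<omega>'' * (indicator {s<..w} (T \<omega>'') * ennreal (1 / Sm (T \<omega>''))) \<partial>M)"
      by (rule nn_integral_add) measurable
    finally show ?thesis unfolding st4 cform[OF wt] by simp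
  qed
  have AEw: "AE \<omega>'' in M. w < T \<omega>'' \<longrightarrow> 0 < S w"
  proof (cases "0 < S w")
    case True then show ?thesis by simp
  next
    case False
    then have "S w = 0" using S_nonneg[of w] by simp
    then have "{\<omega> \<in> space M. w < T \<omega>} \<in> null_sets M"
      by (simp add: S_eq emeasure_eq_measure null_sets_def)
    then show ?thesis by (rule AE_I') auto
  qed
  have "(\<integral>\<^sup>+\<omega>''. indicator Aset \<omega>'' * (indicator {s<..} (T \<omega>'') * ennreal (1 / S s) + \<Psi> \<omega>'') \<partial>M)
     = (\<integral>\<^sup>+\<omega>''. indicator Aset \<omega>'' * (indicator {w<..} (T \<omega>'') * ennreal (1 / S w)
            + indicator {s<..w} (T \<omega>'') * ennreal (1 / Sm (T \<omega>''))) \<partial>M)"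
  proof (intro nn_integral_cong_AE)
    show "AE \<omega>'' in M. indicator Aset \<omega>'' * (indicator {s<..} (T \<omega>'') * ennreal (1 / S s) + \<Psi> \<omega>'') =
      indicator Aset \<omega>'' * (indicator {w<..} (T \<omega>'') * ennreal (1 / S w)
            + indicator {s<..w} (T \<omega>'') * ennreal (1 / Sm (T \<omega>'')))"
      using AEw
    proof (eventually_elim)
      fix \<omega>'' assume hw: "w < T \<omega>'' \<longrightarrow> 0 < S w"
      let ?y = "T \<omega>''"
      have "indicator {s<..} ?y * ennreal (1 / S s) + \<Psi> \<omega>'' =
            indicator {w<..} ?y * ennreal (1 / S w) + indicator {s<..w} ?y * ennreal (1 / Sm ?y)"
      proof (cases "?y \<le> s")
        case True
        have "\<Psi> \<omega>'' = 0" unfolding \<Psi>_def using True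
          by (intro nn_integral_zero') (auto simp: indicator_def)
        then show ?thesis using True sw by (simp add: indicator_def)
      next
        case ns: False
        show ?thesis
        proof (cases "?y \<le> w")
          case True
          have "\<Psi> \<omega>'' = (\<integral>\<^sup>+\<omega>. indicator {s<..<?y} (T \<omega>) * ennreal (1 / (S (T \<omega>) * Sm (T \<omega>))) \<partial>M)"
            unfolding \<Psi>_def \<phi>_def using True by (intro nn_integral_cong) (auto simp: indicator_def)
          moreover have "0 < Sm ?y" using Sm_anti[OF True] Smw by simp
          ultimately have "ennreal (1 / S s) + \<Psi> \<omega>'' = ennreal (1 / Sm ?y)"
            using K1M[of s ?y] ns by simp
          then show ?thesis using ns True by (simp add: indicator_def)
        next
          case False
          have "\<Psi> \<omega>'' = (\<integral>\<^sup>+\<omega>. indicator {s<..w} (T \<omega>) * ennreal (1 / (S (T \<omega>) * Sm (T \<omega>))) \<partial>M)"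
            unfolding \<Psi>_def \<phi>_def using False by (intro nn_integral_cong) (auto simp: indicator_def)
          moreover have "0 < S w" using hw False by simp
          ultimately have "ennreal (1 / S s) + \<Psi> \<omega>'' = ennreal (1 / S w)"
            using K2M[of s w] sw by simp
          then show ?thesis using ns False sw by (simp add: indicator_def)
        qed
      qed
      then show "indicator Aset \<omega>'' * (indicator {s<..} (T \<omega>'') * ennreal (1 / S s) + \<Psi> \<omega>'') =
      indicator Aset \<omega>'' * (indicator {w<..} (T \<omega>'') * ennreal (1 / S w)
            + indicator {s<..w} (T \<omega>'') * ennreal (1 / Sm (T \<omega>'')))" by simp
    qed
  qed
  then show ?thesis using lhs rhs by simp
qed

end


locale cr3 = cr2 +
  fixes Tt :: "'a \<Rightarrow> real"
  assumes Tt[measurable]: "Tt \<in> borel_measurable M"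
    and Tt_le: "\<forall>\<omega>\<in>space M. Tt \<omega> \<le> T \<omega>"
begin

definition Stm where "Stm u = measure M {\<omega> \<in> space M. u \<le> Tt \<omega>}"
definition St where "St u = measure M {\<omega> \<in> space M. u < Tt \<omega>}"

lemma Stm_le_Sm: "Stm u \<le> Sm u"
  unfolding Stm_def Sm_def using Tt_le by (intro finite_measure_mono) (auto intro: order_trans, measurable)

lemma Stm_meas[measurable]: "Stm \<in> borel_measurable borel"
proof -
  have "mono (\<lambda>u. - Stm u)" unfolding mono_def Stm_def
    by (auto intro!: finite_measure_mono, measurable)
  then have "(\<lambda>u. - (- Stm u)) \<in> borel_measurable borel"
    by (intro borel_measurable_uminus borel_measurable_mono)
  then show ?thesis by simp
qed

lemma Stm_nn: "ennreal (Stm u) = (\<integral>\<^sup>+\<omega>'. (if u \<le> Tt \<omega>' then 1 else 0) \<partial>M)"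
proof -
  have "(\<integral>\<^sup>+\<omega>'. (if u \<le> Tt \<omega>' then 1 else 0) \<partial>M) = (\<integral>\<^sup>+\<omega>'. indicator {\<omega> \<in> space M. u \<le> Tt \<omega>} \<omega>' \<partial>M)"
    by (intro nn_integral_cong) (auto simp: indicator_def)
  also have "\<dots> = ennreal (Stm u)" by (simp add: Stm_def emeasure_eq_measure)
  finally show ?thesis ..
qed

lemma star_nn:
  assumes st: "s < t"
  shows "ennreal (c s) * ennreal (St s)
     + (\<integral>\<^sup>+\<omega>. indicator {s<..t} (T \<omega>) * ennreal (c (T \<omega>)) * ennreal (1 / Sm (T \<omega>)) * ennreal (Stm (T \<omega>)) \<partial>M)
   = (\<integral>\<^sup>+\<omega>. indicator {s<..t} (Tt \<omega>) * ennreal (c (Tt \<omega>)) \<partial>M)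
     + (\<integral>\<^sup>+\<omega>. indicator {s<..t} (T \<omega>) * indicator {\<omega>. D \<omega> = j} \<omega> * ennreal (1 / Sm (T \<omega>)) * ennreal (Stm (T \<omega>)) \<partial>M)"
proof -
  define F1 where "F1 p = indicator {s<..t} (T (fst p)) * ennreal (c (T (fst p))) * ennreal (1 / Sm (T (fst p)))
      * (if T (fst p) \<le> Tt (snd p) then 1 else 0)" for p
  define F2 where "F2 p = indicator {s<..t} (T (fst p)) * indicator {\<omega>. D \<omega> = j} (fst p) * ennreal (1 / Sm (T (fst p)))
      * (if T (fst p) \<le> Tt (snd p) then 1 else 0)" for p
  have F1m[measurable]: "F1 \<in> borel_measurable (M \<Otimes>\<^sub>M M)" unfolding F1_def by measurable
  have F2m[measurable]: "F2 \<in> borel_measurable (M \<Otimes>\<^sub>M M)" unfolding F2_def by measurable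
  have swap: "(\<integral>\<^sup>+\<omega>. (\<integral>\<^sup>+\<omega>'. F (\<omega>, \<omega>') \<partial>M) \<partial>M) = (\<integral>\<^sup>+\<omega>'. (\<integral>\<^sup>+\<omega>. F (\<omega>, \<omega>') \<partial>M) \<partial>M)"
    if Fm: "F \<in> borel_measurable (M \<Otimes>\<^sub>M M)" for F
  proof -
    have Fm2: "(\<lambda>(x,y). F (x,y)) \<in> borel_measurable (M \<Otimes>\<^sub>M M)" unfolding case_prod_eta by (rule Fm)
    show ?thesis using pair_sigma_finite.Fubini'[OF PS Fm2] by simp
  qed
  define \<Phi>1 where "\<Phi>1 \<omega>' = (\<integral>\<^sup>+\<omega>. F1 (\<omega>, \<omega>') \<partial>M)" for \<omega>'
  define \<Phi>2 where "\<Phi>2 \<omega>' = (\<integral>\<^sup>+\<omega>. F2 (\<omega>, \<omega>') \<partial>M)" for \<omega>'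
  have \<Phi>m[measurable]: "\<Phi>1 \<in> borel_measurable M" "\<Phi>2 \<in> borel_measurable M"
    unfolding \<Phi>1_def \<Phi>2_def by measurable
  have i1: "(\<integral>\<^sup>+\<omega>. indicator {s<..t} (T \<omega>) * ennreal (c (T \<omega>)) * ennreal (1 / Sm (T \<omega>)) * ennreal (Stm (T \<omega>)) \<partial>M)
     = (\<integral>\<^sup>+\<omega>'. \<Phi>1 \<omega>' \<partial>M)"
    unfolding \<Phi>1_def swap[OF F1m, symmetric] unfolding F1_def Stm_nn
    by (intro nn_integral_cong, subst nn_integral_cmult[symmetric]) (auto intro!: nn_integral_cong)
  have i2: "(\<integral>\<^sup>+\<omega>. indicator {s<..t} (T \<omega>) * indicator {\<omega>. D \<omega> = j} \<omega> * ennreal (1 / Sm (T \<omega>)) * ennreal (Stm (T \<omega>)) \<partial>M)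
     = (\<integral>\<^sup>+\<omega>'. \<Phi>2 \<omega>' \<partial>M)"
    unfolding \<Phi>2_def swap[OF F2m, symmetric] unfolding F2_def Stm_nn
    by (intro nn_integral_cong, subst nn_integral_cmult[symmetric]) (auto intro!: nn_integral_cong)
  have i3: "ennreal (c s) * ennreal (St s) = (\<integral>\<^sup>+\<omega>'. indicator {s<..} (Tt \<omega>') * ennreal (c s) \<partial>M)"
  proof -
    have "(\<integral>\<^sup>+\<omega>'. indicator {s<..} (Tt \<omega>') * ennreal (c s) \<partial>M) = (\<integral>\<^sup>+\<omega>'. indicator {s<..} (Tt \<omega>') \<partial>M) * ennreal (c s)"
      by (rule nn_integral_multc) measurable
    also have "(\<integral>\<^sup>+\<omega>'. indicator {s<..} (Tt \<omega>') \<partial>M) = (\<integral>\<^sup>+\<omega>'. indicator {\<omega> \<in> space M. s < Tt \<omega>} \<omega>' \<partial>M)"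
      by (intro nn_integral_cong) (auto simp: indicator_def)
    also have "\<dots> = ennreal (St s)" by (simp add: St_def emeasure_eq_measure)
    finally show ?thesis by (simp add: mult.commute)
  qed
  have i4: "(\<integral>\<^sup>+\<omega>. indicator {s<..t} (Tt \<omega>) * ennreal (c (Tt \<omega>)) \<partial>M)
      = (\<integral>\<^sup>+\<omega>'. indicator {s<..} (Tt \<omega>') * ennreal (c (min (Tt \<omega>') t)) \<partial>M)"
    by (intro nn_integral_cong) (auto simp: indicator_def c_t min_def)
  have lhs: "ennreal (c s) * ennreal (St s)
     + (\<integral>\<^sup>+\<omega>. indicator {s<..t} (T \<omega>) * ennreal (c (T \<omega>)) * ennreal (1 / Sm (T \<omega>)) * ennreal (Stm (T \<omega>)) \<partial>M)
     = (\<integral>\<^sup>+\<omega>'. indicator {s<..} (Tt \<omega>') * ennreal (c s) + \<Phi>1 \<omega>' \<partial>M)"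
    unfolding i1 i3 by (rule nn_integral_add[symmetric]) measurable
  have rhs: "(\<integral>\<^sup>+\<omega>. indicator {s<..t} (Tt \<omega>) * ennreal (c (Tt \<omega>)) \<partial>M)
     + (\<integral>\<^sup>+\<omega>. indicator {s<..t} (T \<omega>) * indicator {\<omega>. D \<omega> = j} \<omega> * ennreal (1 / Sm (T \<omega>)) * ennreal (Stm (T \<omega>)) \<partial>M)
     = (\<integral>\<^sup>+\<omega>'. indicator {s<..} (Tt \<omega>') * ennreal (c (min (Tt \<omega>') t)) + \<Phi>2 \<omega>' \<partial>M)"
    unfolding i2 i4 by (rule nn_integral_add[symmetric]) measurable
  have "(\<integral>\<^sup>+\<omega>'. indicator {s<..} (Tt \<omega>') * ennreal (c s) + \<Phi>1 \<omega>' \<partial>M)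
      = (\<integral>\<^sup>+\<omega>'. indicator {s<..} (Tt \<omega>') * ennreal (c (min (Tt \<omega>') t)) + \<Phi>2 \<omega>' \<partial>M)"
  proof (intro nn_integral_cong_AE)
    have AEp: "AE \<omega>' in M. 0 < measure M {\<omega>'' \<in> space M. Tt \<omega>' \<le> Tt \<omega>''}"
      by (rule AE_pos[OF prob_space_axioms Tt])
    then show "AE \<omega>' in M. indicator {s<..} (Tt \<omega>') * ennreal (c s) + \<Phi>1 \<omega>' =
        indicator {s<..} (Tt \<omega>') * ennreal (c (min (Tt \<omega>') t)) + \<Phi>2 \<omega>'"
    proof (eventually_elim)
      fix \<omega>' assume pos: "0 < measure M {\<omega>'' \<in> space M. Tt \<omega>' \<le> Tt \<omega>''}"
      let ?x = "Tt \<omega>'"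
      show "indicator {s<..} ?x * ennreal (c s) + \<Phi>1 \<omega>' =
        indicator {s<..} ?x * ennreal (c (min ?x t)) + \<Phi>2 \<omega>'"
      proof (cases "?x \<le> s")
        case True
        have "\<Phi>1 \<omega>' = 0" unfolding \<Phi>1_def F1_def using True
          by (intro nn_integral_zero') (auto simp: indicator_def)
        moreover have "\<Phi>2 \<omega>' = 0" unfolding \<Phi>2_def F2_def using True
          by (intro nn_integral_zero') (auto simp: indicator_def)
        ultimately show ?thesis using True by simp
      next
        case False
        define w where "w = min ?x t"
        have sw: "s < w" and wt: "w \<le> t" using False st by (auto simp: w_def)
        have "0 < Stm ?x" using pos by (simp add: Stm_def)
        then have "0 < Sm ?x" using Stm_le_Sm[of ?x] by simp
        then have Smw: "0 < Sm w" using Sm_anti[of w ?x] by (simp add: w_def)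
        have "\<Phi>1 \<omega>' = (\<integral>\<^sup>+\<omega>. indicator {s<..w} (T \<omega>) * ennreal (c (T \<omega>)) * ennreal (1 / Sm (T \<omega>)) \<partial>M)"
          unfolding \<Phi>1_def F1_def by (intro nn_integral_cong) (auto simp: indicator_def w_def)
        moreover have "\<Phi>2 \<omega>' = (\<integral>\<^sup>+\<omega>. indicator {s<..w} (T \<omega>) * indicator {\<omega>. D \<omega> = j} \<omega> * ennreal (1 / Sm (T \<omega>)) \<partial>M)"
          unfolding \<Phi>2_def F2_def by (intro nn_integral_cong) (auto simp: indicator_def w_def)
        ultimately show ?thesis using L_main[OF sw wt Smw] False by (simp add: w_def)
      qed
    qed
  qed
  then show ?thesis using lhs rhs by simp
qed

end


lemma cif_meas_eq:
  fixes X :: "'a \<Rightarrow> real" and E :: "'a \<Rightarrow> nat"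
  assumes P: "prob_space M" and X[measurable]: "X \<in> borel_measurable M"
    and E[measurable]: "E \<in> measurable M (count_space UNIV)"
  shows "cif_meas M X E i = distr (density M (\<lambda>\<omega>. ennreal (indicator {\<omega> \<in> space M. E \<omega> = i} \<omega>))) borel X"
proof -
  let ?N = "distr (density M (\<lambda>\<omega>. ennreal (indicator {\<omega> \<in> space M. E \<omega> = i} \<omega>))) borel X"
  have "cif_meas M X E i = measure_of UNIV (sets borel) (emeasure ?N)"
    unfolding cif_meas_def
  proof (rule measure_of_eq)
    show "sets borel \<subseteq> Pow UNIV" by simp
    fix a :: "real set" assume "a \<in> sigma_sets UNIV (sets borel)"
    then have a[measurable]: "a \<in> sets borel" by (simp add: sets.sigma_sets_eq[of borel, simplified])
    have "emeasure ?N a = emeasure (density M (\<lambda>\<omega>. ennreal (indicator {\<omega> \<in> space M. E \<omega> = i} \<omega>))) (X -` a \<inter> space M)"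
      by (subst emeasure_distr) (auto simp: measurable_cong_sets[OF sets_density refl])
    also have "\<dots> = (\<integral>\<^sup>+\<omega>. ennreal (indicator {\<omega> \<in> space M. E \<omega> = i} \<omega>) * indicator (X -` a \<inter> space M) \<omega> \<partial>M)"
      by (subst emeasure_density) auto
    also have "\<dots> = (\<integral>\<^sup>+\<omega>. indicator {\<omega> \<in> space M. X \<omega> \<in> a \<and> E \<omega> = i} \<omega> \<partial>M)"
      by (intro nn_integral_cong) (auto simp: indicator_def)
    also have "\<dots> = emeasure M {\<omega> \<in> space M. X \<omega> \<in> a \<and> E \<omega> = i}" by simp
    finally show "emeasure M {\<omega> \<in> space M. X \<omega> \<in> a \<and> E \<omega> = i} = emeasure ?N a" ..
  qed
  also have "\<dots> = ?N"
    using measure_of_of_measure[of ?N] by simp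
  finally show ?thesis .
qed

lemma cif_conv:
  fixes X :: "'a \<Rightarrow> real" and E :: "'a \<Rightarrow> nat" and f :: "real \<Rightarrow> real"
  assumes P: "prob_space M" and X[measurable]: "X \<in> borel_measurable M"
    and E[measurable]: "E \<in> measurable M (count_space UNIV)"
    and f[measurable]: "f \<in> borel_measurable borel"
  shows "integral\<^sup>L (cif_meas M X E i) f = (\<integral>\<omega>. indicator {\<omega> \<in> space M. E \<omega> = i} \<omega> * f (X \<omega>) \<partial>M)"
proof -
  have Xd: "X \<in> measurable (density M (\<lambda>\<omega>. ennreal (indicator {\<omega> \<in> space M. E \<omega> = i} \<omega>))) borel"
    by (simp add: measurable_cong_sets[OF sets_density refl])
  have "integral\<^sup>L (cif_meas M X E i) f = (\<integral>\<omega>. f (X \<omega>) \<partial>density M (\<lambda>\<omega>. ennreal (indicator {\<omega> \<in> space M. E \<omega> = i} \<omega>)))"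
    unfolding cif_meas_eq[OF P X E] by (rule integral_distr[OF Xd f])
  also have "\<dots> = (\<integral>\<omega>. indicator {\<omega> \<in> space M. E \<omega> = i} \<omega> * f (X \<omega>) \<partial>M)"
    by (subst integral_density) auto
  finally show ?thesis .
qed

lemma haz_conv:
  fixes X :: "'a \<Rightarrow> real" and E :: "'a \<Rightarrow> nat" and f :: "real \<Rightarrow> real"
  assumes P: "prob_space M" and X[measurable]: "X \<in> borel_measurable M"
    and E[measurable]: "E \<in> measurable M (count_space UNIV)"
    and f[measurable]: "f \<in> borel_measurable borel"
    and sl[measurable]: "surv_left M X \<in> borel_measurable borel"
    and slnn: "\<And>u. 0 \<le> surv_left M X u"
  shows "integral\<^sup>L (haz_meas M X E i) f
     = (\<integral>\<omega>. indicator {\<omega> \<in> space M. E \<omega> = i} \<omega> * (1 / surv_left M X (X \<omega>) * f (X \<omega>)) \<partial>M)"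
proof -
  have sets: "sets (cif_meas M X E i) = sets borel"
    unfolding cif_meas_eq[OF P X E] by simp
  have "integral\<^sup>L (haz_meas M X E i) f = (\<integral>u. 1 / surv_left M X u * f u \<partial>cif_meas M X E i)"
    unfolding haz_meas_def
    by (subst integral_density) (auto simp: measurable_cong_sets[OF sets refl] slnn)
  also have "\<dots> = (\<integral>\<omega>. indicator {\<omega> \<in> space M. E \<omega> = i} \<omega> * (1 / surv_left M X (X \<omega>) * f (X \<omega>)) \<partial>M)"
    by (rule cif_conv[OF P X E]) measurable
  finally show ?thesis .
qed


lemma intg_bdd:
  fixes f :: "'a \<Rightarrow> real"
  assumes "prob_space M" "f \<in> borel_measurable M" "\<And>\<omega>. \<omega> \<in> space M \<Longrightarrow> \<bar>f \<omega>\<bar> \<le> B"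
  shows "integrable M f"
proof -
  interpret prob_space M by fact
  show ?thesis using assms(3) by (intro integrable_const_bound[where B=B] AE_I2 assms(2)) auto
qed

lemma sum_ind:
  fixes E :: "'a \<Rightarrow> nat"
  assumes "\<omega> \<in> space M" "finite I"
  shows "(\<Sum>i\<in>I. indicator {\<omega> \<in> space M. E \<omega> = i} \<omega> * (f \<omega> :: real)) = (if E \<omega> \<in> I then f \<omega> else 0)"
proof -
  have "(\<Sum>i\<in>I. indicator {\<omega> \<in> space M. E \<omega> = i} \<omega> * f \<omega>) = (\<Sum>i\<in>I. if E \<omega> = i then f \<omega> else 0)"
    using assms by (intro sum.cong) (auto simp: indicator_def)
  also have "\<dots> = (if E \<omega> \<in> I then f \<omega> else 0)" using assms(2) by (simp add: sum.delta)
  finally show ?thesis .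
qed

lemma ratio_bd: "0 \<le> (a::real) \<Longrightarrow> a \<le> b \<Longrightarrow> 0 \<le> 1 / b * a \<and> 1 / b * a \<le> 1"
  by (cases "b = 0") (auto simp: divide_le_eq_1)


theorem lemma4:
  fixes M :: "'a measure" and T Tt :: "'a \<Rightarrow> real" and D Dt :: "'a \<Rightarrow> nat"
    and d j :: nat and s t :: real and g :: "real \<Rightarrow> real"
  assumes "prob_space M"
    and "d \<ge> 1"
    and "T \<in> borel_measurable M" and "Tt \<in> borel_measurable M"
    and "D \<in> measurable M (count_space UNIV)"
    and "\<forall>\<omega>\<in>space M. 0 < T \<omega> \<and> D \<omega> \<in> {1..d}"
    and "\<forall>\<omega>\<in>space M. 0 < Tt \<omega> \<and> Tt \<omega> \<le> T \<omega>"
    and "\<forall>\<omega>\<in>space M. Dt \<omega> = (if Tt \<omega> = T \<omega> then D \<omega> else 0)"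
    and "j \<in> {1..d}"
    and "surv M Tt s > 0"
    and "t > s"
    \<comment> \<open>g is a version of u \<mapsto> P(T \<le> t, D = j | Tt = u, Dt = 0)\<close>
    and "g \<in> borel_measurable borel"
    and "\<forall>u. 0 \<le> g u \<and> g u \<le> 1"
    and "\<forall>A\<in>sets borel.
           measure M {\<omega> \<in> space M. T \<omega> \<le> t \<and> D \<omega> = j \<and> Tt \<omega> \<in> A \<and> Dt \<omega> = 0}
           = set_lebesgue_integral (cif_meas M Tt Dt 0) A g"
  shows
    "measure M {\<omega> \<in> space M. T \<omega> \<le> t \<and> D \<omega> = j \<and> T \<omega> > s} / surv M T s
     - measure M {\<omega> \<in> space M. T \<omega> \<le> t \<and> D \<omega> = j \<and> Tt \<omega> > s} / surv M Tt s
     = (\<Sum>i=1..d. set_lebesgue_integral (haz_meas M Tt Dt i) {s<..t}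
            (\<lambda>u. cond_cif M T D j t u * surv_left M Tt u / surv M Tt s))
       - (\<Sum>i=1..d. set_lebesgue_integral (haz_meas M T D i) {s<..t}
            (\<lambda>u. cond_cif M T D j t u * surv_left M Tt u / surv M Tt s))
     + (set_lebesgue_integral (haz_meas M T D j) {s<..t} (\<lambda>u. surv_left M Tt u / surv M Tt s)
        - set_lebesgue_integral (haz_meas M Tt Dt j) {s<..t} (\<lambda>u. surv_left M Tt u / surv M Tt s))
     + (1 / surv M Tt s) * set_lebesgue_integral (cif_meas M Tt Dt 0) {s<..t}
            (\<lambda>u. cond_cif M T D j t u - g u)"
proof -
  note P = assms(1)
  have cr3: "cr3 M T D Tt"
    using assms unfolding cr3_def cr2_def cr_def cr3_axioms_def cr2_axioms_def cr_axioms_def by auto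
  interpret cr3 M T D j t Tt using cr3 by simp
  have st: "s < t" by fact
  have TD[measurable]: "D \<in> measurable M (count_space UNIV)" by fact
  have Dt_eq: "\<And>\<omega>. \<omega> \<in> space M \<Longrightarrow> Dt \<omega> = (if Tt \<omega> = T \<omega> then D \<omega> else 0)" using assms(8) by auto
  have Dtm[measurable]: "Dt \<in> measurable M (count_space UNIV)"
  proof -
    have "(\<lambda>\<omega>. if Tt \<omega> = T \<omega> then D \<omega> else 0) \<in> measurable M (count_space UNIV)" by measurable
    then show ?thesis by (subst measurable_cong[OF Dt_eq]) auto
  qed
  have gm[measurable]: "g \<in> borel_measurable borel" by fact
  have g01: "\<And>u. 0 \<le> g u \<and> g u \<le> 1" using assms(13) by auto
  define \<sigma> where "\<sigma> = surv M Tt s"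
  have \<sigma>pos: "0 < \<sigma>" using assms(10) by (simp add: \<sigma>_def)
  have \<sigma>St: "\<sigma> = St s" by (simp add: \<sigma>_def St_def surv_def)
  have slT: "surv_left M T = Sm" by (rule ext) (simp add: surv_left_eq[OF P T] Sm_def)
  have slTt: "surv_left M Tt = Stm" by (rule ext) (simp add: surv_left_eq[OF P Tt] Stm_def)

  have SmM[measurable]: "Sm \<in> borel_measurable borel" by (rule Sm_meas)
  have cM[measurable]: "c \<in> borel_measurable borel" by (rule c_meas)
  have hazT: "set_lebesgue_integral (haz_meas M T D i) {s<..t} h
      = (\<integral>\<omega>. indicator {\<omega> \<in> space M. D \<omega> = i} \<omega> * (1 / Sm (T \<omega>) * (indicator {s<..t} (T \<omega>) * h (T \<omega>))) \<partial>M)"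
    if hm[measurable]: "h \<in> borel_measurable borel" for i and h :: "real \<Rightarrow> real"
    unfolding set_lebesgue_integral_def
    by (subst haz_conv[OF P T TD]) (simp_all add: slT Sm_nonneg)
  have hazTt: "set_lebesgue_integral (haz_meas M Tt Dt i) {s<..t} h
      = (\<integral>\<omega>. indicator {\<omega> \<in> space M. Dt \<omega> = i} \<omega> * (1 / Stm (Tt \<omega>) * (indicator {s<..t} (Tt \<omega>) * h (Tt \<omega>))) \<partial>M)"
    if hm[measurable]: "h \<in> borel_measurable borel" for i and h :: "real \<Rightarrow> real"
    unfolding set_lebesgue_integral_def
    by (subst haz_conv[OF P Tt Dtm]) (simp_all add: slTt Stm_def)
  have cif0: "set_lebesgue_integral (cif_meas M Tt Dt 0) {s<..t} h
      = (\<integral>\<omega>. indicator {\<omega> \<in> space M. Dt \<omega> = 0} \<omega> * (indicator {s<..t} (Tt \<omega>) * h (Tt \<omega>)) \<partial>M)"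
    if hm[measurable]: "h \<in> borel_measurable borel" for h :: "real \<Rightarrow> real"
    unfolding set_lebesgue_integral_def
    by (subst cif_conv[OF P Tt Dtm]) simp_all

  have StmM[measurable]: "Stm \<in> borel_measurable borel" by (rule Stm_meas)
  have rb: "0 \<le> 1 / Sm u * Stm u \<and> 1 / Sm u * Stm u \<le> 1" for u
    using ratio_bd[OF _ Stm_le_Sm[of u]] by (simp add: Stm_def)
  have cb: "u \<in> {s<..t} \<Longrightarrow> 0 \<le> c u \<and> c u \<le> 1" for u using c_nonneg c_le1 by auto
  define fA where "fA \<omega> = indicator {s<..t} (T \<omega>) * c (T \<omega>) * (1 / Sm (T \<omega>) * Stm (T \<omega>))" for \<omega>
  define fB where "fB \<omega> = indicator {s<..t} (Tt \<omega>) * c (Tt \<omega>)" for \<omega>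
  define fC where "fC \<omega> = indicator {s<..t} (T \<omega>) * indicator {\<omega>. D \<omega> = j} \<omega> * (1 / Sm (T \<omega>) * Stm (T \<omega>))" for \<omega>
  have fAm[measurable]: "fA \<in> borel_measurable M" unfolding fA_def by measurable
  have fBm[measurable]: "fB \<in> borel_measurable M" unfolding fB_def by measurable
  have fCm[measurable]: "fC \<in> borel_measurable M" unfolding fC_def by measurable
  have fA01: "0 \<le> fA \<omega> \<and> fA \<omega> \<le> 1" for \<omega>
  proof (cases "T \<omega> \<in> {s<..t}")
    case True
    then have "0 \<le> c (T \<omega>) \<and> c (T \<omega>) \<le> 1" using cb by auto
    with rb[of "T \<omega>"] have h: "0 \<le> c (T \<omega>) * (1 / Sm (T \<omega>) * Stm (T \<omega>)) \<and> c (T \<omega>) * (1 / Sm (T \<omega>) * Stm (T \<omega>)) \<le> 1"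
      by (metis mult_le_one mult_nonneg_nonneg)
    have "indicator {s<..t} (T \<omega>) = (1::real)" using True by simp
    then show ?thesis using h by (simp only: fA_def mult_1_left)
  next
    case False then show ?thesis by (simp add: fA_def)
  qed
  have fB01: "0 \<le> fB \<omega> \<and> fB \<omega> \<le> 1" for \<omega>
    using cb[of "Tt \<omega>"] unfolding fB_def by (cases "Tt \<omega> \<in> {s<..t}") auto
  have fC01: "0 \<le> fC \<omega> \<and> fC \<omega> \<le> 1" for \<omega>
    using rb[of "T \<omega>"] unfolding fC_def by (cases "T \<omega> \<in> {s<..t}"; cases "D \<omega> = j") auto
  have fAi: "integrable M fA" by (rule intg_bdd[OF P fAm, of 1]) (use fA01 in auto)
  have fBi: "integrable M fB" by (rule intg_bdd[OF P fBm, of 1]) (use fB01 in auto)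
  have fCi: "integrable M fC" by (rule intg_bdd[OF P fCm, of 1]) (use fC01 in auto)
  have nnA: "(\<integral>\<^sup>+\<omega>. indicator {s<..t} (T \<omega>) * ennreal (c (T \<omega>)) * ennreal (1 / Sm (T \<omega>)) * ennreal (Stm (T \<omega>)) \<partial>M)
      = ennreal (integral\<^sup>L M fA)"
  proof -
    have "(\<integral>\<^sup>+\<omega>. indicator {s<..t} (T \<omega>) * ennreal (c (T \<omega>)) * ennreal (1 / Sm (T \<omega>)) * ennreal (Stm (T \<omega>)) \<partial>M)
        = (\<integral>\<^sup>+\<omega>. ennreal (fA \<omega>) \<partial>M)"
    proof (intro nn_integral_cong)
      fix \<omega> show "indicator {s<..t} (T \<omega>) * ennreal (c (T \<omega>)) * ennreal (1 / Sm (T \<omega>)) * ennreal (Stm (T \<omega>)) = ennreal (fA \<omega>)"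
      proof (cases "T \<omega> \<in> {s<..t}")
        case True
        have i1: "indicator {s<..t} (T \<omega>) = (1::ennreal)" and i2: "indicator {s<..t} (T \<omega>) = (1::real)"
          using True by auto
        have n1: "0 \<le> c (T \<omega>)" using cb True by auto
        have n2: "0 \<le> 1 / Sm (T \<omega>)" using Sm_nonneg by simp
        have n3: "0 \<le> Stm (T \<omega>)" by (simp add: Stm_def)
        have e: "ennreal (c (T \<omega>)) * ennreal (1 / Sm (T \<omega>)) * ennreal (Stm (T \<omega>)) = ennreal (c (T \<omega>) * (1 / Sm (T \<omega>) * Stm (T \<omega>)))"
          using n1 n2 n3 by (simp only: ennreal_mult[symmetric] mult.assoc mult_nonneg_nonneg)
        show ?thesis by (simp only: fA_def i1 i2 mult_1_left e)
      next
        case False then show ?thesis by (simp add: fA_def)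
      qed
    qed
    also have "\<dots> = ennreal (integral\<^sup>L M fA)" using fAi fA01 by (intro nn_integral_eq_integral) auto
    finally show ?thesis .
  qed
  have nnB: "(\<integral>\<^sup>+\<omega>. indicator {s<..t} (Tt \<omega>) * ennreal (c (Tt \<omega>)) \<partial>M) = ennreal (integral\<^sup>L M fB)"
  proof -
    have "(\<integral>\<^sup>+\<omega>. indicator {s<..t} (Tt \<omega>) * ennreal (c (Tt \<omega>)) \<partial>M) = (\<integral>\<^sup>+\<omega>. ennreal (fB \<omega>) \<partial>M)"
      unfolding fB_def by (intro nn_integral_cong) (auto simp: indicator_def)
    also have "\<dots> = ennreal (integral\<^sup>L M fB)" using fBi fB01 by (intro nn_integral_eq_integral) auto
    finally show ?thesis .
  qed
  have nnC: "(\<integral>\<^sup>+\<omega>. indicator {s<..t} (T \<omega>) * indicator {\<omega>. D \<omega> = j} \<omega> * ennreal (1 / Sm (T \<omega>)) * ennreal (Stm (T \<omega>)) \<partial>M)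
      = ennreal (integral\<^sup>L M fC)"
  proof -
    have "(\<integral>\<^sup>+\<omega>. indicator {s<..t} (T \<omega>) * indicator {\<omega>. D \<omega> = j} \<omega> * ennreal (1 / Sm (T \<omega>)) * ennreal (Stm (T \<omega>)) \<partial>M)
        = (\<integral>\<^sup>+\<omega>. ennreal (fC \<omega>) \<partial>M)"
    proof (intro nn_integral_cong)
      fix \<omega> show "indicator {s<..t} (T \<omega>) * indicator {\<omega>. D \<omega> = j} \<omega> * ennreal (1 / Sm (T \<omega>)) * ennreal (Stm (T \<omega>)) = ennreal (fC \<omega>)"
      proof -
        have e2: "ennreal (1 / Sm (T \<omega>)) * ennreal (Stm (T \<omega>)) = ennreal (1 / Sm (T \<omega>) * Stm (T \<omega>))"
          using Sm_nonneg[of "T \<omega>"] by (subst ennreal_mult) (auto simp: Stm_def)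
        show ?thesis unfolding fC_def
          by (cases "T \<omega> \<in> {s<..t}"; cases "D \<omega> = j") (simp_all only: e2 mult.assoc[symmetric] indicator_simps mult_1_left mult_zero_left ennreal_0 ennreal_1 mem_Collect_eq, auto)
      qed
    qed
    also have "\<dots> = ennreal (integral\<^sup>L M fC)" using fCi fC01 by (intro nn_integral_eq_integral) auto
    finally show ?thesis .
  qed
  have star: "c s * \<sigma> + integral\<^sup>L M fA = integral\<^sup>L M fB + integral\<^sup>L M fC"
  proof -
    have cs0: "0 \<le> c s" using c_nonneg st by simp
    have s0: "0 \<le> \<sigma>" using \<sigma>pos by simp
    have iA: "0 \<le> integral\<^sup>L M fA" using fA01 by (intro integral_nonneg_AE) auto
    have iB: "0 \<le> integral\<^sup>L M fB" using fB01 by (intro integral_nonneg_AE) auto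
    have iC: "0 \<le> integral\<^sup>L M fC" using fC01 by (intro integral_nonneg_AE) auto
    from star_nn[OF st] have "ennreal (c s) * ennreal \<sigma> + ennreal (integral\<^sup>L M fA) = ennreal (integral\<^sup>L M fB) + ennreal (integral\<^sup>L M fC)"
      unfolding nnA nnB nnC \<sigma>St .
    then have "ennreal (c s * \<sigma> + integral\<^sup>L M fA) = ennreal (integral\<^sup>L M fB + integral\<^sup>L M fC)"
      using cs0 s0 iA iB iC by (simp add: ennreal_mult)
    then show ?thesis using cs0 s0 iA iB iC by (subst (asm) ennreal_inj) auto
  qed

  have Dr: "\<And>\<omega>. \<omega> \<in> space M \<Longrightarrow> D \<omega> \<in> {1..d}" using assms(6) by auto
  have Dtr: "\<And>\<omega>. \<omega> \<in> space M \<Longrightarrow> Dt \<omega> \<in> {1..d} \<longleftrightarrow> Dt \<omega> \<noteq> 0"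
  proof -
    fix \<omega> assume w: "\<omega> \<in> space M"
    show "Dt \<omega> \<in> {1..d} \<longleftrightarrow> Dt \<omega> \<noteq> 0"
      using Dr[OF w] Dt_eq[OF w] by (cases "Tt \<omega> = T \<omega>") auto
  qed
  have AEpos: "AE \<omega> in M. 0 < Stm (Tt \<omega>)"
    using AE_pos[OF P Tt] by (simp add: Stm_def)
  have fAs: "integrable M (\<lambda>\<omega>. fA \<omega> / \<sigma>)" using fAi by simp
  have eqR2: "(\<Sum>i=1..d. set_lebesgue_integral (haz_meas M T D i) {s<..t} (\<lambda>u. c u * Stm u / \<sigma>))
      = integral\<^sup>L M fA / \<sigma>"
  proof -
    have "(\<Sum>i=1..d. set_lebesgue_integral (haz_meas M T D i) {s<..t} (\<lambda>u. c u * Stm u / \<sigma>))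
        = (\<Sum>i=1..d. (\<integral>\<omega>. indicator {\<omega> \<in> space M. D \<omega> = i} \<omega> * (fA \<omega> / \<sigma>) \<partial>M))"
    proof (intro sum.cong refl)
      fix i
      show "set_lebesgue_integral (haz_meas M T D i) {s<..t} (\<lambda>u. c u * Stm u / \<sigma>)
          = (\<integral>\<omega>. indicator {\<omega> \<in> space M. D \<omega> = i} \<omega> * (fA \<omega> / \<sigma>) \<partial>M)"
        by (subst hazT) (measurable, auto intro!: Bochner_Integration.integral_cong simp: fA_def divide_inverse mult_ac)
    qed
    also have "\<dots> = (\<integral>\<omega>. (\<Sum>i=1..d. indicator {\<omega> \<in> space M. D \<omega> = i} \<omega> * (fA \<omega> / \<sigma>)) \<partial>M)"
    proof (rule Bochner_Integration.integral_sum[where I="{1..d}" and f="\<lambda>i \<omega>. indicator {\<omega> \<in> space M. D \<omega> = i} \<omega> * (fA \<omega> / \<sigma>)", symmetric])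
      fix i
      show "integrable M (\<lambda>\<omega>. indicator {\<omega> \<in> space M. D \<omega> = i} \<omega> * (fA \<omega> / \<sigma>))"
        using integrable_mult_indicator[OF _ fAs, of "{\<omega> \<in> space M. D \<omega> = i}"] by simp
    qed
    also have "\<dots> = (\<integral>\<omega>. fA \<omega> / \<sigma> \<partial>M)"
    proof (intro Bochner_Integration.integral_cong refl)
      fix x assume x: "x \<in> space M"
      show "(\<Sum>i=1..d. indicator {\<omega> \<in> space M. D \<omega> = i} x * (fA x / \<sigma>)) = fA x / \<sigma>"
        using sum_ind[OF x, where I="{1..d}" and E=D and f="\<lambda>\<omega>. fA \<omega> / \<sigma>"] Dr[OF x] by simp
    qed
    finally show ?thesis by simp
  qed

  define fB1 where "fB1 \<omega> = indicator {\<omega> \<in> space M. Dt \<omega> \<noteq> 0} \<omega> * fB \<omega>" for \<omega>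
  define fB0 where "fB0 \<omega> = indicator {\<omega> \<in> space M. Dt \<omega> = 0} \<omega> * fB \<omega>" for \<omega>
  have fB1i: "integrable M fB1" unfolding fB1_def
    using integrable_mult_indicator[OF _ fBi, of "{\<omega> \<in> space M. Dt \<omega> \<noteq> 0}"] by simp
  have fB0i: "integrable M fB0" unfolding fB0_def
    using integrable_mult_indicator[OF _ fBi, of "{\<omega> \<in> space M. Dt \<omega> = 0}"] by simp
  have fBsplit: "integral\<^sup>L M fB = integral\<^sup>L M fB1 + integral\<^sup>L M fB0"
  proof -
    have "integral\<^sup>L M fB = (\<integral>\<omega>. fB1 \<omega> + fB0 \<omega> \<partial>M)"
      by (intro Bochner_Integration.integral_cong refl) (auto simp: fB1_def fB0_def indicator_def)
    also have "\<dots> = integral\<^sup>L M fB1 + integral\<^sup>L M fB0" by (rule Bochner_Integration.integral_add[OF fB1i fB0i])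
    finally show ?thesis .
  qed
  have fBs: "integrable M (\<lambda>\<omega>. fB \<omega> / \<sigma>)" using fBi by simp
  have eqR1: "(\<Sum>i=1..d. set_lebesgue_integral (haz_meas M Tt Dt i) {s<..t} (\<lambda>u. c u * Stm u / \<sigma>))
      = integral\<^sup>L M fB1 / \<sigma>"
  proof -
    have "(\<Sum>i=1..d. set_lebesgue_integral (haz_meas M Tt Dt i) {s<..t} (\<lambda>u. c u * Stm u / \<sigma>))
        = (\<Sum>i=1..d. (\<integral>\<omega>. indicator {\<omega> \<in> space M. Dt \<omega> = i} \<omega> * (fB \<omega> / \<sigma>) \<partial>M))"
    proof (intro sum.cong refl)
      fix i
      have "(\<integral>\<omega>. indicator {\<omega> \<in> space M. Dt \<omega> = i} \<omega> * (1 / Stm (Tt \<omega>) * (indicator {s<..t} (Tt \<omega>) * (c (Tt \<omega>) * Stm (Tt \<omega>) / \<sigma>))) \<partial>M)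
          = (\<integral>\<omega>. indicator {\<omega> \<in> space M. Dt \<omega> = i} \<omega> * (fB \<omega> / \<sigma>) \<partial>M)"
      proof (intro integral_cong_AE)
        show "AE \<omega> in M. indicator {\<omega> \<in> space M. Dt \<omega> = i} \<omega> * (1 / Stm (Tt \<omega>) * (indicator {s<..t} (Tt \<omega>) * (c (Tt \<omega>) * Stm (Tt \<omega>) / \<sigma>)))
            = indicator {\<omega> \<in> space M. Dt \<omega> = i} \<omega> * (fB \<omega> / \<sigma>)"
          using AEpos by eventually_elim (simp add: fB_def)
      qed measurable
      then show "set_lebesgue_integral (haz_meas M Tt Dt i) {s<..t} (\<lambda>u. c u * Stm u / \<sigma>)
          = (\<integral>\<omega>. indicator {\<omega> \<in> space M. Dt \<omega> = i} \<omega> * (fB \<omega> / \<sigma>) \<partial>M)"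
        by (subst hazTt) measurable
    qed
    also have "\<dots> = (\<integral>\<omega>. (\<Sum>i=1..d. indicator {\<omega> \<in> space M. Dt \<omega> = i} \<omega> * (fB \<omega> / \<sigma>)) \<partial>M)"
    proof (rule Bochner_Integration.integral_sum[where I="{1..d}" and f="\<lambda>i \<omega>. indicator {\<omega> \<in> space M. Dt \<omega> = i} \<omega> * (fB \<omega> / \<sigma>)", symmetric])
      fix i
      show "integrable M (\<lambda>\<omega>. indicator {\<omega> \<in> space M. Dt \<omega> = i} \<omega> * (fB \<omega> / \<sigma>))"
        using integrable_mult_indicator[OF _ fBs, of "{\<omega> \<in> space M. Dt \<omega> = i}"] by simp
    qed
    also have "\<dots> = (\<integral>\<omega>. fB1 \<omega> / \<sigma> \<partial>M)"
    proof (intro Bochner_Integration.integral_cong refl)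
      fix x assume x: "x \<in> space M"
      show "(\<Sum>i=1..d. indicator {\<omega> \<in> space M. Dt \<omega> = i} x * (fB x / \<sigma>)) = fB1 x / \<sigma>"
        using sum_ind[OF x, where I="{1..d}" and E=Dt and f="\<lambda>\<omega>. fB \<omega> / \<sigma>"] Dtr[OF x] x
        by (simp add: fB1_def)
    qed
    finally show ?thesis by simp
  qed
  have eqR3: "set_lebesgue_integral (haz_meas M T D j) {s<..t} (\<lambda>u. Stm u / \<sigma>) = integral\<^sup>L M fC / \<sigma>"
  proof -
    have "set_lebesgue_integral (haz_meas M T D j) {s<..t} (\<lambda>u. Stm u / \<sigma>) = (\<integral>\<omega>. fC \<omega> / \<sigma> \<partial>M)"
      by (subst hazT) (measurable, auto intro!: Bochner_Integration.integral_cong simp: fC_def divide_inverse mult_ac indicator_def)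
    then show ?thesis by simp
  qed
  define P4 where "P4 = measure M {\<omega> \<in> space M. Dt \<omega> = j \<and> Tt \<omega> \<in> {s<..t}}"
  have eqR4: "set_lebesgue_integral (haz_meas M Tt Dt j) {s<..t} (\<lambda>u. Stm u / \<sigma>) = P4 / \<sigma>"
  proof -
    have "(\<integral>\<omega>. indicator {\<omega> \<in> space M. Dt \<omega> = j} \<omega> * (1 / Stm (Tt \<omega>) * (indicator {s<..t} (Tt \<omega>) * (Stm (Tt \<omega>) / \<sigma>))) \<partial>M)
        = (\<integral>\<omega>. indicator {\<omega> \<in> space M. Dt \<omega> = j \<and> Tt \<omega> \<in> {s<..t}} \<omega> / \<sigma> \<partial>M)"
    proof (intro integral_cong_AE)
      show "AE \<omega> in M. indicator {\<omega> \<in> space M. Dt \<omega> = j} \<omega> * (1 / Stm (Tt \<omega>) * (indicator {s<..t} (Tt \<omega>) * (Stm (Tt \<omega>) / \<sigma>)))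
          = indicator {\<omega> \<in> space M. Dt \<omega> = j \<and> Tt \<omega> \<in> {s<..t}} \<omega> / \<sigma>"
        using AEpos by eventually_elim (simp add: indicator_def)
    qed measurable
    also have "\<dots> = P4 / \<sigma>" unfolding P4_def by simp
    finally show ?thesis by (subst hazTt) measurable
  qed
  define Q0 where "Q0 = measure M {\<omega> \<in> space M. T \<omega> \<le> t \<and> D \<omega> = j \<and> Tt \<omega> \<in> {s<..t} \<and> Dt \<omega> = 0}"
  have gpart: "(\<integral>\<omega>. indicator {\<omega> \<in> space M. Dt \<omega> = 0} \<omega> * (indicator {s<..t} (Tt \<omega>) * g (Tt \<omega>)) \<partial>M) = Q0"
  proof -
    have "Q0 = set_lebesgue_integral (cif_meas M Tt Dt 0) {s<..t} g"
      unfolding Q0_def using bspec[OF assms(14), of "{s<..t}"] by simp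
    then show ?thesis using cif0[OF gm] by simp
  qed
  have eqR5: "set_lebesgue_integral (cif_meas M Tt Dt 0) {s<..t} (\<lambda>u. c u - g u) = integral\<^sup>L M fB0 - Q0"
  proof -
    have gi: "integrable M (\<lambda>\<omega>. indicator {\<omega> \<in> space M. Dt \<omega> = 0} \<omega> * (indicator {s<..t} (Tt \<omega>) * g (Tt \<omega>)))"
      by (rule intg_bdd[OF P _, of _ 1]) (measurable, use g01 in \<open>auto simp: indicator_def abs_le_iff\<close>)
    have "set_lebesgue_integral (cif_meas M Tt Dt 0) {s<..t} (\<lambda>u. c u - g u)
        = (\<integral>\<omega>. fB0 \<omega> - indicator {\<omega> \<in> space M. Dt \<omega> = 0} \<omega> * (indicator {s<..t} (Tt \<omega>) * g (Tt \<omega>)) \<partial>M)"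
      by (subst cif0) (measurable, auto intro!: Bochner_Integration.integral_cong simp: fB0_def fB_def algebra_simps)
    also have "\<dots> = integral\<^sup>L M fB0 - Q0"
      by (subst Bochner_Integration.integral_diff[OF fB0i gi]) (simp add: gpart)
    finally show ?thesis .
  qed

  have L1: "measure M {\<omega> \<in> space M. T \<omega> \<le> t \<and> D \<omega> = j \<and> T \<omega> > s} / surv M T s = c s"
    using st by (simp add: c_eq G_def)
  have j0: "j \<noteq> 0" using assms(9) by simp
  have L2: "measure M {\<omega> \<in> space M. T \<omega> \<le> t \<and> D \<omega> = j \<and> Tt \<omega> > s} = P4 + Q0"
  proof -
    have eq: "{\<omega> \<in> space M. T \<omega> \<le> t \<and> D \<omega> = j \<and> Tt \<omega> > s}
        = {\<omega> \<in> space M. Dt \<omega> = j \<and> Tt \<omega> \<in> {s<..t}} \<union> {\<omega> \<in> space M. T \<omega> \<le> t \<and> D \<omega> = j \<and> Tt \<omega> \<in> {s<..t} \<and> Dt \<omega> = 0}"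
    proof (intro set_eqI iffI)
      fix \<omega> assume "\<omega> \<in> {\<omega> \<in> space M. T \<omega> \<le> t \<and> D \<omega> = j \<and> Tt \<omega> > s}"
      then have w: "\<omega> \<in> space M" and h: "T \<omega> \<le> t" "D \<omega> = j" "Tt \<omega> > s" by auto
      have "Tt \<omega> \<le> T \<omega>" using Tt_le w by auto
      then show "\<omega> \<in> {\<omega> \<in> space M. Dt \<omega> = j \<and> Tt \<omega> \<in> {s<..t}} \<union> {\<omega> \<in> space M. T \<omega> \<le> t \<and> D \<omega> = j \<and> Tt \<omega> \<in> {s<..t} \<and> Dt \<omega> = 0}"
        using w h Dt_eq[OF w] by (cases "Tt \<omega> = T \<omega>") auto
    next
      fix \<omega> assume a: "\<omega> \<in> {\<omega> \<in> space M. Dt \<omega> = j \<and> Tt \<omega> \<in> {s<..t}} \<union> {\<omega> \<in> space M. T \<omega> \<le> t \<and> D \<omega> = j \<and> Tt \<omega> \<in> {s<..t} \<and> Dt \<omega> = 0}"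
      then have w: "\<omega> \<in> space M" by auto
      show "\<omega> \<in> {\<omega> \<in> space M. T \<omega> \<le> t \<and> D \<omega> = j \<and> Tt \<omega> > s}"
        using a w Dt_eq[OF w] j0 by (cases "Tt \<omega> = T \<omega>") auto
    qed
    have "measure M ({\<omega> \<in> space M. Dt \<omega> = j \<and> Tt \<omega> \<in> {s<..t}} \<union> {\<omega> \<in> space M. T \<omega> \<le> t \<and> D \<omega> = j \<and> Tt \<omega> \<in> {s<..t} \<and> Dt \<omega> = 0})
        = P4 + Q0"
      unfolding P4_def Q0_def using j0 by (intro finite_measure_Union) (auto, measurable)
    then show ?thesis using eq by simp
  qed
  have cs: "c s = (integral\<^sup>L M fB1 + integral\<^sup>L M fB0 + integral\<^sup>L M fC - integral\<^sup>L M fA) / \<sigma>"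
    using star fBsplit \<sigma>pos by (simp add: field_simps)
  show ?thesis
    unfolding slTt \<sigma>_def[symmetric] eqR1 eqR2 eqR3 eqR4 eqR5 L1 L2 cs
    using \<sigma>pos by (simp add: field_simps)
qed


end
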